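(* Let $\mathbb{F}\in\{\mathbb{R},\mathbb{C},\mathbb{H}\}$ and let $A\in\mathbb{F}_d[z,z^{-1}]$ be a matrix Laurent polynomial which, regarded as a complex matrix Laurent polynomial, satisfies $\det A(z)\neq 0$ for all $|z|=1$. Let $\mathcal{K}=\{\kappa_1\ge\dots\ge\kappa_d\}$ be its set of symmetric partial indices. Then there exists a factorization $A=A_+DA_-$ such that $A_+\in\mathbb{F}_d[z]$ is invertible for all $|z|\le 1$, $A_-\in\mathbb{F}_d[z^{-1}]$ is invertible for all $|z^{-1}|\le 1$, and $$D(z,z^{-1})=\sum_{m=1}^d z^{\kappa_m}\,|m\rangle\langle m|\,\mathbf{1}_{\mathbb{F}} .$$
   Context: $\mathbb{F}_d$ denotes $d\times d$ matrices with entries in $\mathbb{F}$, and $\mathbb{F}_d[z,z^{-1}]$ (resp. $\mathbb{F}_d[z]$, $\mathbb{F}_d[z^{-1}]$) denotes matrix Laurent polynomials $\sum_{r=p}^q a_r z^r$ with $a_r\in\mathbb{F}_d$ (resp. with only $r\ge0$, only $r\le 0$). Quaternions are realized inside $2\times2$ complex matrices as real combinations of $\mathbf{1}_{\mathbb{H}}=I_2$, $\mathbf{i}=i\sigma_x$, $\mathbf{j}=i\sigma_y$, $\mathbf{k}=i\sigma_z$; thus $\mathbb{H}_d\subset\mathbb{C}_{2d}$ consists of complex $2d\times 2d$ matrices $Q$ with $(I_d\otimes\sigma_y)\overline{Q}(I_d\otimes\sigma_y)=Q$, and $|m\rangle\langle m|\mathbf{1}_{\mathbb{F}}$ denotes the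 matrix unit at position $(m,m)$ (a $2\times2$ identity block when $\mathbb{F}=\mathbb{H}$). A (standard) Wiener–Hopf (WH) factorization of a complex matrix Laurent polynomial $A$ invertible on the unit circle is $A=A_+DA_-$ with $A_+$ a polynomial in $z$ invertible for $|z|\le1$, $A_-$ a polynomial in $z^{-1}$ invertible for $|z^{-1}|\le1$, and $D=\mathrm{diag}(z^{\kappa_1},\dots,z^{\kappa_n})$ with integers $\kappa_1\ge\dots\ge\kappa_n$; such a factorization exists and the integers (partial indices) are uniquely determined by $A$. Symmetric partial indices: for $\mathbb{F}=\mathbb{R},\mathbb{C}$, $\mathcal{K}$ is the list of standard partial indices of $A$; for $\mathbb{F}=\mathbb{H}$, the $2d$ standard partial indices of $A$ viewed in $\mathbb{C}_{2d}$ occur in equal pairs, and $\mathcal{K}$ is the list of $d$ integers obtained by keeping one from each pair, ordered $\kappa_1\ge\dots\ge\kappa_d$. *)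

theory Defs
  imports Complex_Main "Jordan_Normal_Form.Determinant"
begin

text \<open>The ground field F in {R, C, H}.  Quaternionic matrices are realized as complex
  matrices of twice the size; b F is the block size (1 for R, C and 2 for H).\<close>

datatype fld = FR | FC | FH

definition blk :: "fld \<Rightarrow> nat" where
  "blk F = (if F = FH then 2 else 1)"

text \<open>I_d tensor sigma_y, a complex 2d x 2d matrix.\<close>
definition Jq :: "nat \<Rightarrow> complex mat" where
  "Jq d = mat (2*d) (2*d) (\<lambda>(i,j). if i div 2 = j div 2 then
      (if i mod 2 = 0 \<and> j mod 2 = 1 then - \<i> else if i mod 2 = 1 \<and> j mod 2 = 0 then \<i> else 0)
    else 0)"

definition in_Fd :: "fld \<Rightarrow> nat \<Rightarrow> complex mat \<Rightarrow> bool" where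
  "in_Fd F d Q \<longleftrightarrow> Q \<in> carrier_mat (blk F * d) (blk F * d) \<and>
     (F = FR \<longrightarrow> map_mat cnj Q = Q) \<and>
     (F = FH \<longrightarrow> Jq d * map_mat cnj Q * Jq d = Q)"

text \<open>A (complex n x n) matrix Laurent polynomial is given by its coefficient function
  c :: int => complex mat, with finitely many nonzero coefficients, all n x n.\<close>
definition lsupp :: "nat \<Rightarrow> (int \<Rightarrow> complex mat) \<Rightarrow> int set" where
  "lsupp n c = {k. c k \<noteq> 0\<^sub>m n n}"

definition is_laurent :: "nat \<Rightarrow> (int \<Rightarrow> complex mat) \<Rightarrow> bool" where
  "is_laurent n c \<longleftrightarrow> (\<forall>k. c k \<in> carrier_mat n n) \<and> finite (lsupp n c)"

definition leval :: "nat \<Rightarrow> (int \<Rightarrow> complex mat) \<Rightarrow> complex \<Rightarrow> complex mat" where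
  "leval n c z = mat n n (\<lambda>(i,j). \<Sum>k\<in>lsupp n c. z powi k * (c k $$ (i,j)))"

text \<open>For a polynomial in z^{-1}: evaluation as a polynomial in the variable w = z^{-1}
  (this also makes sense at w = 0, i.e. z = infinity).\<close>
definition leval_inv :: "nat \<Rightarrow> (int \<Rightarrow> complex mat) \<Rightarrow> complex \<Rightarrow> complex mat" where
  "leval_inv n c w = mat n n (\<lambda>(i,j). \<Sum>k\<in>lsupp n c. w ^ nat (- k) * (c k $$ (i,j)))"

definition is_poly_pos :: "nat \<Rightarrow> (int \<Rightarrow> complex mat) \<Rightarrow> bool" where
  "is_poly_pos n c \<longleftrightarrow> is_laurent n c \<and> (\<forall>k<0. c k = 0\<^sub>m n n)"

definition is_poly_neg :: "nat \<Rightarrow> (int \<Rightarrow> complex mat) \<Rightarrow> bool" where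
  "is_poly_neg n c \<longleftrightarrow> is_laurent n c \<and> (\<forall>k>0. c k = 0\<^sub>m n n)"

definition is_F_laurent :: "fld \<Rightarrow> nat \<Rightarrow> (int \<Rightarrow> complex mat) \<Rightarrow> bool" where
  "is_F_laurent F d c \<longleftrightarrow> is_laurent (blk F * d) c \<and> (\<forall>k. in_Fd F d (c k))"

definition diag_pow :: "int list \<Rightarrow> complex \<Rightarrow> complex mat" where
  "diag_pow ks z = mat (length ks) (length ks) (\<lambda>(i,j). if i = j then z powi (ks ! i) else 0)"

definition plus_factor :: "nat \<Rightarrow> (int \<Rightarrow> complex mat) \<Rightarrow> bool" where
  "plus_factor n Ap \<longleftrightarrow> is_poly_pos n Ap \<and> (\<forall>z. cmod z \<le> 1 \<longrightarrow> det (leval n Ap z) \<noteq> 0)"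

definition minus_factor :: "nat \<Rightarrow> (int \<Rightarrow> complex mat) \<Rightarrow> bool" where
  "minus_factor n Am \<longleftrightarrow> is_poly_neg n Am \<and> (\<forall>w. cmod w \<le> 1 \<longrightarrow> det (leval_inv n Am w) \<noteq> 0)"

text \<open>ks is the list of standard partial indices of the complex n x n Laurent polynomial A:
  ks is nonincreasing and A admits a (complex) Wiener-Hopf factorization A = A+ D A-
  with D = diag(z^ks).  (Partial indices are unique, so this determines ks.)\<close>
definition std_partial_indices :: "nat \<Rightarrow> (int \<Rightarrow> complex mat) \<Rightarrow> int list \<Rightarrow> bool" where
  "std_partial_indices n A ks \<longleftrightarrow> length ks = n \<and> sorted_wrt (\<ge>) ks \<and>
     (\<exists>Ap Am. plus_factor n Ap \<and> minus_factor n Am \<and>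
        (\<forall>z. z \<noteq> 0 \<longrightarrow> leval n A z = leval n Ap z * diag_pow ks z * leval n Am z))"

text \<open>Symmetric partial indices K = [k_1 >= ... >= k_d]: for R, C the standard partial
  indices; for H the 2d standard indices come in equal pairs [k_1,k_1,...,k_d,k_d].\<close>
definition expand_idx :: "fld \<Rightarrow> int list \<Rightarrow> int list" where
  "expand_idx F K = (if F = FH then concat (map (\<lambda>k. [k, k]) K) else K)"

definition sym_partial_indices :: "fld \<Rightarrow> nat \<Rightarrow> (int \<Rightarrow> complex mat) \<Rightarrow> int list \<Rightarrow> bool" where
  "sym_partial_indices F d A K \<longleftrightarrow> length K = d \<and> sorted_wrt (\<ge>) K \<and>
     std_partial_indices (blk F * d) A (expand_idx F K)"

text \<open>D(z) = sum_m z^{k_m} |m><m| 1_F, as a complex (blk F * d) square matrix: the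
  diagonal entry at position i lies in block m = i div blk F.\<close>
definition D_F :: "fld \<Rightarrow> int list \<Rightarrow> complex \<Rightarrow> complex mat" where
  "D_F F K z = mat (blk F * length K) (blk F * length K)
     (\<lambda>(i,j). if i = j then z powi (K ! (i div blk F)) else 0)"

end

theory Submission
  imports Defs "HOL-Computational_Algebra.Polynomial" "HOL-Computational_Algebra.Fundamental_Theorem_Algebra"
   "HOL-Computational_Algebra.Field_as_Ring" "Jordan_Normal_Form.Char_Poly"
begin


definition ispoly :: "(complex \<Rightarrow> complex) \<Rightarrow> bool" where
  "ispoly f \<longleftrightarrow> (\<exists>p. f = poly p)"

lemma ispoly_const[simp,intro]: "ispoly (\<lambda>x. c)"
  unfolding ispoly_def by (rule exI[of _ "[:c:]"]) auto

lemma ispoly_id[simp,intro]: "ispoly (\<lambda>x. x)"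
  unfolding ispoly_def by (rule exI[of _ "[:0,1:]"]) auto

lemma ispoly_add[intro]: "ispoly f \<Longrightarrow> ispoly g \<Longrightarrow> ispoly (\<lambda>x. f x + g x)"
  unfolding ispoly_def proof (elim exE)
  fix p q assume "f = poly p" "g = poly q" thus "\<exists>r. (\<lambda>x. f x + g x) = poly r" by (intro exI[of _ "p + q"]) auto
qed

lemma ispoly_mult[intro]: "ispoly f \<Longrightarrow> ispoly g \<Longrightarrow> ispoly (\<lambda>x. f x * g x)"
  unfolding ispoly_def proof (elim exE)
  fix p q assume "f = poly p" "g = poly q" thus "\<exists>r. (\<lambda>x. f x * g x) = poly r" by (intro exI[of _ "p * q"]) auto
qed

lemma ispoly_uminus[intro]: "ispoly f \<Longrightarrow> ispoly (\<lambda>x. - f x)"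
  unfolding ispoly_def proof (elim exE)
  fix p assume "f = poly p" thus "\<exists>r. (\<lambda>x. - f x) = poly r" by (intro exI[of _ "- p"]) auto
qed

lemma ispoly_pow[intro]: "ispoly f \<Longrightarrow> ispoly (\<lambda>x. f x ^ k)"
  unfolding ispoly_def proof (elim exE)
  fix p assume "f = poly p" thus "\<exists>r. (\<lambda>x. f x ^ k) = poly r" by (intro exI[of _ "p ^ k"]) auto
qed

lemma ispoly_cnj[intro]: "ispoly f \<Longrightarrow> ispoly (\<lambda>x. cnj (f (cnj x)))"
  unfolding ispoly_def proof (elim exE)
  fix p assume "f = poly p" thus "\<exists>r. (\<lambda>x. cnj (f (cnj x))) = poly r" by (intro exI[of _ "map_poly cnj p"]) auto
qed

lemma ispoly_sum[intro]: "(\<And>i. i \<in> S \<Longrightarrow> ispoly (f i)) \<Longrightarrow> ispoly (\<lambda>x. \<Sum>i\<in>S. f i x)"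
proof -
  assume "\<And>i. i \<in> S \<Longrightarrow> ispoly (f i)"
  then obtain p where p: "\<And>i. i \<in> S \<Longrightarrow> f i = poly (p i)" unfolding ispoly_def by metis
  show ?thesis unfolding ispoly_def
    by (rule exI[of _ "\<Sum>i\<in>S. p i"]) (auto simp: poly_sum p)
qed

lemma ispoly_prod[intro]: "(\<And>i. i \<in> S \<Longrightarrow> ispoly (f i)) \<Longrightarrow> ispoly (\<lambda>x. \<Prod>i\<in>S. f i x)"
proof -
  assume "\<And>i. i \<in> S \<Longrightarrow> ispoly (f i)"
  then obtain p where p: "\<And>i. i \<in> S \<Longrightarrow> f i = poly (p i)" unfolding ispoly_def by metis
  show ?thesis unfolding ispoly_def
    by (rule exI[of _ "\<Prod>i\<in>S. p i"]) (auto simp: poly_prod p)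
qed

lemma ispoly_cong: "ispoly f \<Longrightarrow> (\<And>x. f x = g x) \<Longrightarrow> ispoly g"
  by (metis ext)

lemma ispoly_ident:
  assumes "ispoly f" "ispoly g" "infinite S" "\<forall>x\<in>S. f x = g x"
  shows "f = g"
proof -
  obtain p q where pq: "f = poly p" "g = poly q" using assms unfolding ispoly_def by auto
  have "S \<subseteq> {x. poly (p - q) x = 0}" using assms(4) pq by auto
  hence "p - q = 0" using assms(3) poly_roots_finite finite_subset by blast
  thus ?thesis using pq by simp
qed

lemma ispoly_ident_pt:
  assumes "ispoly f" "ispoly g" "infinite S" "\<forall>x\<in>S. f x = g x"
  shows "f x = g x"
  using ispoly_ident[OF assms] by simp

lemma infinite_pos_reals: "infinite {z::complex. \<exists>x. z = of_real x \<and> 0 < x \<and> x \<le> 1}"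
proof
  assume f: "finite {z::complex. \<exists>x. z = of_real x \<and> 0 < x \<and> x \<le> 1}"
  have "{0<..(1::real)} \<subseteq> Re ` {z::complex. \<exists>x. z = of_real x \<and> 0 < x \<and> x \<le> 1}"
    by (auto intro!: image_eqI[where x="of_real _"])
  hence "finite {0<..(1::real)}" using f finite_subset by blast
  thus False using infinite_Ioc[of "0::real" 1] by simp
qed

lemma ispoly_both_const:
  assumes f: "ispoly f" and g: "ispoly g" and eq: "\<forall>z. z \<noteq> 0 \<longrightarrow> f z = g (1/z)"
  shows "f z = f 0"
proof -
  obtain p q where pq: "f = poly p" "g = poly q" using f g unfolding ispoly_def by auto
  let ?m = "degree q"
  have "\<forall>z\<in>UNIV-{0}. poly (monom 1 ?m * p) z = poly (reflect_poly q) z"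
    using eq pq by (auto simp: poly_monom poly_reflect_poly_nz field_simps)
  hence "poly (monom 1 ?m * p) = poly (reflect_poly q)"
    by (intro ispoly_ident) (auto simp: ispoly_def infinite_UNIV_char_0)
  hence e: "monom 1 ?m * p = reflect_poly q" using poly_eq_poly_eq_iff by blast
  have "degree p = 0"
  proof (cases "p = 0")
    case False
    have "degree (monom (1::complex) ?m * p) = ?m + degree p"
      using False by (simp add: degree_mult_eq degree_monom_eq)
    moreover have "degree (reflect_poly q) \<le> ?m" by (rule degree_reflect_poly_le)
    ultimately show ?thesis using e by simp
  qed simp
  then obtain c where "p = [:c:]" using degree_eq_zeroE by blast
  thus ?thesis using pq by simp
qed




lemma coprime_no_common_root:
  fixes Q H :: "complex poly"
  assumes "Q \<noteq> 0" and nr: "\<And>z. poly Q z = 0 \<Longrightarrow> poly H z = 0 \<Longrightarrow> False"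
  shows "coprime Q H"
proof -
  let ?G = "gcd Q H"
  have G0: "?G \<noteq> 0" using assms(1) by simp
  show ?thesis
  proof (cases "constant (poly ?G)")
    case True
    hence "degree ?G = 0" using constant_degree by blast
    hence "is_unit ?G" using is_unit_iff_degree[OF G0] by simp
    thus ?thesis using is_unit_gcd by blast
  next
    case False
    then obtain z where z: "poly ?G z = 0" using fundamental_theorem_of_algebra by blast
    have "?G dvd Q" "?G dvd H" by auto
    then obtain a b where "Q = ?G * a" "H = ?G * b" by (metis dvdE)
    hence "poly Q z = 0" "poly H z = 0" using z by (metis mult_zero_left poly_mult)+
    thus ?thesis using nr by blast
  qed
qed

lemma key_poly:
  fixes P Q S R :: "complex poly" and ki kj :: int
  assumes Q: "\<forall>z. cmod z \<le> 1 \<longrightarrow> poly Q z \<noteq> 0"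
  and S: "\<forall>w. cmod w \<le> 1 \<longrightarrow> poly S w \<noteq> 0"
  and eq: "\<forall>z. z \<noteq> 0 \<longrightarrow> poly S (1/z) * poly P z * z powi kj = poly Q z * z powi ki * poly R (1/z)"
  shows "\<exists>T. P = Q * T \<and> (\<exists>g. \<forall>z. z \<noteq> 0 \<longrightarrow> poly T z * z powi (kj - ki) = poly g (1/z))"
proof -
  define m where "m = degree S"
  define r where "r = degree R"
  define mn where "mn = min ki kj"
  define e where "e = nat (kj - mn)"
  define f where "f = nat (ki - mn)"
  have kj: "kj = mn + int e" and ki: "ki = mn + int f" unfolding e_def f_def mn_def by auto
  define H where "H = reflect_poly S * monom 1 (r + e)"
  have S0: "coeff S 0 \<noteq> 0" using S by (metis norm_zero poly_0_coeff_0 zero_le_one)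
  have Q0: "Q \<noteq> 0" using Q by (metis norm_zero poly_0 zero_le_one)
  have peq: "poly (H * P) z = poly (Q * (reflect_poly R * monom 1 (m + f))) z" if z: "z \<noteq> 0" for z
  proof -
    have e1: "z powi kj = z powi mn * z ^ e" "z powi ki = z powi mn * z ^ f"
      unfolding kj ki using z by (simp_all add: power_int_add)
    have zmn: "z powi mn \<noteq> 0" using z by simp
    have "z powi mn * (poly S (1/z) * poly P z * z ^ e) = z powi mn * (poly Q z * z ^ f * poly R (1/z))"
      using eq[rule_format, OF z] unfolding e1 by (simp add: algebra_simps)
    hence "poly S (1/z) * poly P z * z ^ e = poly Q z * z ^ f * poly R (1/z)"
      using zmn by (simp only: mult_cancel_left) blast
    hence "(z^m * poly S (1/z)) * poly P z * z ^ (r + e) = poly Q z * ((z^r * poly R (1/z)) * z ^ (m + f))"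
      by (simp add: power_add algebra_simps)
    thus ?thesis unfolding H_def using z
      by (simp add: poly_reflect_poly_nz poly_monom inverse_eq_divide m_def r_def algebra_simps)
  qed
  have "poly (H * P) = poly (Q * (reflect_poly R * monom 1 (m + f)))"
    by (rule ispoly_ident[where S="UNIV - {0}"]) (use peq in \<open>auto simp: ispoly_def infinite_UNIV_char_0\<close>)
  hence HP: "H * P = Q * (reflect_poly R * monom 1 (m + f))" using poly_eq_poly_eq_iff by blast
  have cop: "coprime Q H"
  proof (rule coprime_no_common_root[OF Q0])
    fix z assume Qz: "poly Q z = 0" and Hz: "poly H z = 0"
    show False
    proof (cases "z = 0")
      case True thus False using Qz Q by auto
    next
      case False
      have "poly (reflect_poly S) z = 0" using Hz False by (simp add: H_def poly_monom)
      hence "poly S (1/z) = 0" using False by (simp add: poly_reflect_poly_nz inverse_eq_divide)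
      hence "cmod (1/z) > 1" using S by (meson not_le)
      hence "cmod z < 1" using False by (simp add: norm_divide)
      thus False using Qz Q by auto
    qed
  qed
  have "Q dvd H * P" unfolding HP by simp
  hence "Q dvd P" using coprime_dvd_mult_right_iff[OF cop] by (simp add: mult.commute)
  then obtain T where PT: "P = Q * T" by (auto elim!: dvdE)
  have HT: "H * T = reflect_poly R * monom 1 (m + f)"
    using HP Q0 unfolding PT by (metis mult.left_commute mult_cancel_left)
  have "\<exists>g. \<forall>z. z \<noteq> 0 \<longrightarrow> poly T z * z powi (kj - ki) = poly g (1/z)"
  proof (cases "T = 0")
    case True thus ?thesis by (intro exI[of _ 0]) auto
  next
    case False
    have dS: "degree (reflect_poly S) = m" using S0 m_def by simp
    have "S \<noteq> 0" using S0 by auto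
    hence "coeff (reflect_poly S) 0 \<noteq> 0" by (simp add: coeff_0_reflect_poly)
    hence "reflect_poly S \<noteq> 0" by auto
    hence H0: "H \<noteq> 0" unfolding H_def by simp
    have dH: "degree H = m + (r + e)" unfolding H_def
      using \<open>reflect_poly S \<noteq> 0\<close> dS by (subst degree_mult_eq) (auto simp: degree_monom_eq)
    have "degree (H * T) = m + (r + e) + degree T"
      using H0 False dH by (simp add: degree_mult_eq)
    moreover have "degree (reflect_poly R * monom (1::complex) (m + f)) \<le> r + (m + f)"
      by (metis degree_monom_le degree_mult_le degree_reflect_poly_le r_def add_mono order_trans)
    ultimately have dT: "degree T + e \<le> f" using HT by simp
    define k where "k = f - e - degree T"
    have kk: "kj - ki = - int (degree T) - int k" using dT unfolding k_def kj ki by simp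
    show ?thesis
    proof (intro exI[of _ "monom 1 k * reflect_poly T"] allI impI)
      fix z :: complex assume z: "z \<noteq> 0"
      have "poly T z * z powi (kj - ki) = poly T z * (1/z) ^ degree T * (1/z) ^ k"
        unfolding kk using z by (simp add: power_int_diff power_int_minus field_simps)
      also have "\<dots> = poly (monom 1 k * reflect_poly T) (1/z)"
        using z by (simp add: poly_monom poly_reflect_poly_nz)
      finally show "poly T z * z powi (kj - ki) = poly (monom 1 k * reflect_poly T) (1/z)" .
    qed
  qed
  thus ?thesis using PT by blast
qed




definition mpoly :: "nat \<Rightarrow> (complex \<Rightarrow> complex mat) \<Rightarrow> bool" where
  "mpoly n M \<longleftrightarrow> (\<forall>x. M x \<in> carrier_mat n n) \<and> (\<forall>i<n. \<forall>j<n. ispoly (\<lambda>x. M x $$ (i,j)))"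

lemma mpolyD: "mpoly n M \<Longrightarrow> M x \<in> carrier_mat n n"
  "mpoly n M \<Longrightarrow> i < n \<Longrightarrow> j < n \<Longrightarrow> ispoly (\<lambda>x. M x $$ (i,j))"
  unfolding mpoly_def by auto

lemma mpoly_mat: "(\<And>i j. i < n \<Longrightarrow> j < n \<Longrightarrow> ispoly (\<lambda>x. f x i j)) \<Longrightarrow>
   mpoly n (\<lambda>x. mat n n (\<lambda>(i,j). f x i j))"
  unfolding mpoly_def by auto

lemma mpoly_const: "A \<in> carrier_mat n n \<Longrightarrow> mpoly n (\<lambda>x. A)"
  unfolding mpoly_def by auto

lemma mpoly_mult: assumes "mpoly n M" "mpoly n N" shows "mpoly n (\<lambda>x. M x * N x)"
proof -
  have c: "M x \<in> carrier_mat n n" "N x \<in> carrier_mat n n" for x using assms mpolyD by auto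
  have e: "(M x * N x) $$ (i,j) = (\<Sum>k\<in>{0..<n}. M x $$ (i,k) * N x $$ (k,j))" if "i<n" "j<n" for x i j
    using c[of x] that by (simp add: scalar_prod_def)
  show ?thesis unfolding mpoly_def
  proof (intro conjI allI impI)
    fix x show "M x * N x \<in> carrier_mat n n" using c[of x] by auto
  next
    fix i j assume ij: "i < n" "j < n"
    show "ispoly (\<lambda>x. (M x * N x) $$ (i, j))"
      unfolding e[OF ij] using ij assms by (intro ispoly_sum ispoly_mult) (auto intro: mpolyD)
  qed
qed

lemma mpoly_add: assumes "mpoly n M" "mpoly n N" shows "mpoly n (\<lambda>x. M x + N x)"
proof -
  have c: "M x \<in> carrier_mat n n" "N x \<in> carrier_mat n n" for x using assms mpolyD by auto
  show ?thesis unfolding mpoly_def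
  proof (intro conjI allI impI)
    fix x show "M x + N x \<in> carrier_mat n n" using c[of x] by auto
  next
    fix i j assume ij: "i < n" "j < n"
    have e: "(M x + N x) $$ (i,j) = M x $$ (i,j) + N x $$ (i,j)" for x using c[of x] ij by simp
    show "ispoly (\<lambda>x. (M x + N x) $$ (i, j))"
      unfolding e using ij assms by (intro ispoly_add) (auto intro: mpolyD)
  qed
qed

lemma mpoly_smult: assumes "ispoly c" "mpoly n M" shows "mpoly n (\<lambda>x. c x \<cdot>\<^sub>m M x)"
proof -
  have cM: "M x \<in> carrier_mat n n" for x using assms mpolyD by auto
  show ?thesis unfolding mpoly_def
  proof (intro conjI allI impI)
    fix x show "c x \<cdot>\<^sub>m M x \<in> carrier_mat n n" using cM[of x] by auto
  next
    fix i j assume ij: "i < n" "j < n"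
    have e: "(c x \<cdot>\<^sub>m M x) $$ (i,j) = c x * M x $$ (i,j)" for x using cM[of x] ij by simp
    show "ispoly (\<lambda>x. (c x \<cdot>\<^sub>m M x) $$ (i, j))"
      unfolding e using ij assms by (intro ispoly_mult) (auto intro: mpolyD)
  qed
qed

lemma ispoly_det: assumes "mpoly n M" shows "ispoly (\<lambda>x. det (M x))"
proof -
  have c: "M x \<in> carrier_mat n n" for x using assms mpolyD by auto
  have e: "det (M x) = (\<Sum>p\<in>{p. p permutes {0..<n}}. of_int (sign p) * (\<Prod>i = 0..<n. M x $$ (i, p i)))" for x
    using det_def'[OF c[of x]] by simp
  show ?thesis unfolding e
  proof (intro ispoly_sum ispoly_mult ispoly_prod ispoly_const)
    fix p i assume "p \<in> {p. p permutes {0..<n}}" "i \<in> {0..<n}"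
    hence "p i < n" "i < n" by (auto dest: permutes_in_image)
    thus "ispoly (\<lambda>x. M x $$ (i, p i))" using assms by (auto intro: mpolyD)
  qed
qed

lemma mpoly_delete: assumes "mpoly n M" "i < n" "j < n"
  shows "mpoly (n - 1) (\<lambda>x. mat_delete (M x) i j)"
proof -
  have c: "M x \<in> carrier_mat n n" for x using assms mpolyD by auto
  have e: "mat_delete (M x) i j = mat (n-1) (n-1) (\<lambda>(i',j'). M x $$ (if i' < i then i' else Suc i', if j' < j then j' else Suc j'))" for x
    using c[of x] unfolding mat_delete_def by auto
  show ?thesis unfolding e
    by (rule mpoly_mat) (use assms in \<open>auto intro!: mpolyD\<close>)
qed

lemma mpoly_adj: assumes "mpoly n M" shows "mpoly n (\<lambda>x. adj_mat (M x))"
proof -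
  have c: "M x \<in> carrier_mat n n" for x using assms mpolyD by auto
  have e: "adj_mat (M x) = mat n n (\<lambda>(i,j). (-1)^(j+i) * det (mat_delete (M x) j i))" for x
    using c[of x] unfolding adj_mat_def cofactor_def by auto
  show ?thesis unfolding e
    by (rule mpoly_mat, rule ispoly_mult, rule ispoly_const, rule ispoly_det, rule mpoly_delete) (use assms in auto)
qed

lemma mpoly_cnj: assumes "mpoly n M" shows "mpoly n (\<lambda>x. map_mat cnj (M (cnj x)))"
proof -
  have c: "M x \<in> carrier_mat n n" for x using assms mpolyD by auto
  show ?thesis unfolding mpoly_def
  proof (intro conjI allI impI)
    fix x show "map_mat cnj (M (cnj x)) \<in> carrier_mat n n" using c[of "cnj x"] by auto
  next
    fix i j assume ij: "i < n" "j < n"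
    have e: "map_mat cnj (M (cnj x)) $$ (i,j) = cnj (M (cnj x) $$ (i,j))" for x using c[of "cnj x"] ij by simp
    show "ispoly (\<lambda>x. map_mat cnj (M (cnj x)) $$ (i, j))"
      unfolding e using ij assms by (intro ispoly_cnj) (auto intro: mpolyD)
  qed
qed

lemma mpoly_ident:
  assumes "mpoly n M" "mpoly n N" "infinite S" "\<forall>x\<in>S. M x = N x"
  shows "M x = N x"
proof (rule eq_matI)
  have c: "M x \<in> carrier_mat n n" "N x \<in> carrier_mat n n" for x using assms mpolyD by auto
  fix i j assume "i < dim_row (N x)" "j < dim_col (N x)"
  hence ij: "i < n" "j < n" using c[of x] by auto
  show "M x $$ (i, j) = N x $$ (i, j)"
    by (rule ispoly_ident_pt[where f="\<lambda>x. M x $$ (i,j)" and g="\<lambda>x. N x $$ (i,j)", OF _ _ assms(3)])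
      (use assms ij in \<open>auto intro: mpolyD\<close>)
next
  have c: "M x \<in> carrier_mat n n" "N x \<in> carrier_mat n n" for x using assms mpolyD by auto
  show "dim_row (M x) = dim_row (N x)" "dim_col (M x) = dim_col (N x)" using c[of x] by auto
qed




lemma ispoly_monom[simp,intro]: "ispoly (\<lambda>z. z ^ m * c)"
  by (intro ispoly_mult ispoly_pow ispoly_id ispoly_const)

lemma sum_neg_reindex: "(\<Sum>k\<in>{-int N..0}. g k) = (\<Sum>m\<le>N. g (- int m))"
  by (rule sum.reindex_bij_witness[of _ "\<lambda>m. - int m" "\<lambda>k. nat (-k)"]) auto

lemma leval_alt:
  assumes "finite S" "lsupp n C \<subseteq> S" "\<forall>k. C k \<in> carrier_mat n n"
  shows "leval n C z = mat n n (\<lambda>(i,j). \<Sum>k\<in>S. z powi k * C k $$ (i,j))"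
proof (rule eq_matI)
  fix i j assume ij: "i < dim_row (mat n n (\<lambda>(i,j). \<Sum>k\<in>S. z powi k * C k $$ (i,j)))"
     "j < dim_col (mat n n (\<lambda>(i,j). \<Sum>k\<in>S. z powi k * C k $$ (i,j)))"
  hence ij: "i < n" "j < n" by auto
  have "(\<Sum>k\<in>lsupp n C. z powi k * C k $$ (i,j)) = (\<Sum>k\<in>S. z powi k * C k $$ (i,j))"
  proof (rule sum.mono_neutral_left[OF assms(1,2)])
    show "\<forall>k\<in>S - lsupp n C. z powi k * C k $$ (i, j) = 0" using ij by (auto simp: lsupp_def)
  qed
  thus "leval n C z $$ (i, j) = mat n n (\<lambda>(i,j). \<Sum>k\<in>S. z powi k * C k $$ (i,j)) $$ (i, j)"
    using ij by (simp add: leval_def)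
qed (auto simp: leval_def)

lemma leval_inv_alt:
  assumes "finite S" "lsupp n C \<subseteq> S" "\<forall>k. C k \<in> carrier_mat n n"
  shows "leval_inv n C z = mat n n (\<lambda>(i,j). \<Sum>k\<in>S. z ^ nat (-k) * C k $$ (i,j))"
proof (rule eq_matI)
  fix i j assume ij: "i < dim_row (mat n n (\<lambda>(i,j). \<Sum>k\<in>S. z ^ nat (-k) * C k $$ (i,j)))"
     "j < dim_col (mat n n (\<lambda>(i,j). \<Sum>k\<in>S. z ^ nat (-k) * C k $$ (i,j)))"
  hence ij: "i < n" "j < n" by auto
  have "(\<Sum>k\<in>lsupp n C. z ^ nat (-k) * C k $$ (i,j)) = (\<Sum>k\<in>S. z ^ nat (-k) * C k $$ (i,j))"
  proof (rule sum.mono_neutral_left[OF assms(1,2)])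
    show "\<forall>k\<in>S - lsupp n C. z ^ nat (-k) * C k $$ (i, j) = 0" using ij by (auto simp: lsupp_def)
  qed
  thus "leval_inv n C z $$ (i, j) = mat n n (\<lambda>(i,j). \<Sum>k\<in>S. z ^ nat (-k) * C k $$ (i,j)) $$ (i, j)"
    using ij by (simp add: leval_inv_def)
qed (auto simp: leval_inv_def)

lemma leval_carrier[simp]: "leval n C z \<in> carrier_mat n n"
  by (simp add: leval_def)
lemma leval_inv_carrier[simp]: "leval_inv n C z \<in> carrier_mat n n"
  by (simp add: leval_inv_def)

lemma lsupp_pos: "is_poly_pos n C \<Longrightarrow> k \<in> lsupp n C \<Longrightarrow> k \<ge> 0"
  unfolding is_poly_pos_def lsupp_def by (meson mem_Collect_eq not_le)
lemma lsupp_neg: "is_poly_neg n C \<Longrightarrow> k \<in> lsupp n C \<Longrightarrow> k \<le> 0"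
  unfolding is_poly_neg_def lsupp_def by (meson mem_Collect_eq not_le)

lemma mpoly_leval_pos: assumes "is_poly_pos n C" shows "mpoly n (leval n C)"
proof -
  have fin: "finite (lsupp n C)" using assms by (simp add: is_poly_pos_def is_laurent_def)
  show ?thesis unfolding leval_def
  proof (rule mpoly_mat, rule ispoly_sum)
    fix i j k assume "k \<in> lsupp n C"
    hence k: "k \<ge> 0" using lsupp_pos[OF assms] by auto
    show "ispoly (\<lambda>z. z powi k * C k $$ (i, j))"
      by (rule ispoly_cong[where f="\<lambda>z. z ^ nat k * C k $$ (i, j)"]) (use k in \<open>auto simp: power_int_def\<close>)
  qed
qed

lemma mpoly_leval_neg: assumes "is_poly_neg n C" shows "mpoly n (leval_inv n C)"
  unfolding leval_inv_def by (rule mpoly_mat, rule ispoly_sum) auto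

lemma leval_neg_inv: assumes "is_poly_neg n C" "z \<noteq> 0"
  shows "leval n C z = leval_inv n C (1/z)"
  unfolding leval_def leval_inv_def
proof (intro cong_mat refl, clarify, rule sum.cong[OF refl])
  fix i j k assume "k \<in> lsupp n C"
  hence k: "k \<le> 0" using lsupp_neg[OF assms(1)] by auto
  show "z powi k * C k $$ (i, j) = (1 / z) ^ nat (- k) * C k $$ (i, j)"
    using k by (cases "k = 0") (auto simp: power_int_def inverse_eq_divide)
qed

lemma finite_int_bound: "finite (S::int set) \<Longrightarrow> \<exists>N::nat. \<forall>k\<in>S. - int N \<le> k"
proof -
  assume f: "finite S"
  have "\<forall>k\<in>S. - int (nat (\<Sum>k\<in>S. \<bar>k\<bar>)) \<le> k"
  proof
    fix k assume "k \<in> S"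
    hence "\<bar>k\<bar> \<le> (\<Sum>k\<in>S. \<bar>k\<bar>)" using f by (intro member_le_sum) auto
    thus "- int (nat (\<Sum>k\<in>S. \<bar>k\<bar>)) \<le> k" by linarith
  qed
  thus ?thesis by blast
qed

lemma mpoly_to_neg:
  assumes "mpoly n Mw"
  shows "\<exists>Am. is_poly_neg n Am \<and> (\<forall>w. leval_inv n Am w = Mw w)"
proof -
  have "\<forall>i<n. \<forall>j<n. \<exists>p. (\<lambda>x. Mw x $$ (i,j)) = poly p"
    using assms unfolding mpoly_def ispoly_def by auto
  then obtain pp where pp: "\<And>i j. i < n \<Longrightarrow> j < n \<Longrightarrow> (\<lambda>x. Mw x $$ (i,j)) = poly (pp i j)"
    by metis
  define N where "N = (\<Sum>i<n. \<Sum>j<n. degree (pp i j))"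
  have dN: "degree (pp i j) \<le> N" if "i < n" "j < n" for i j
  proof -
    have "degree (pp i j) \<le> (\<Sum>j<n. degree (pp i j))" using that by (intro member_le_sum) auto
    also have "\<dots> \<le> N" unfolding N_def using that by (intro member_le_sum) auto
    finally show ?thesis .
  qed
  define Am where "Am = (\<lambda>k::int. mat n n (\<lambda>(i,j). if k \<le> 0 then coeff (pp i j) (nat (-k)) else 0))"
  have car: "\<forall>k. Am k \<in> carrier_mat n n" unfolding Am_def by auto
  have sub: "lsupp n Am \<subseteq> {-int N..0}"
  proof
    fix k assume k: "k \<in> lsupp n Am"
    show "k \<in> {-int N..0}"
    proof (rule ccontr)
      assume "k \<notin> {-int N..0}"
      hence kk: "k > 0 \<or> (k \<le> 0 \<and> N < nat (-k))" by (simp add: not_le) linarith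
      have "Am k = 0\<^sub>m n n"
      proof (rule eq_matI)
        fix i j assume ij: "i < dim_row (0\<^sub>m n n :: complex mat)" "j < dim_col (0\<^sub>m n n :: complex mat)"
        hence ij: "i < n" "j < n" by auto
        have "coeff (pp i j) (nat (-k)) = 0" if "k \<le> 0" "N < nat (-k)"
        proof (rule coeff_eq_0)
          show "degree (pp i j) < nat (-k)" using dN[OF ij] that(2) by linarith
        qed
        thus "Am k $$ (i,j) = 0\<^sub>m n n $$ (i,j)" using kk ij unfolding Am_def by auto
      qed (auto simp: Am_def)
      thus False using k by (simp add: lsupp_def)
    qed
  qed
  have fin: "finite (lsupp n Am)" using sub finite_subset by blast
  have "Am k = 0\<^sub>m n n" if "k > 0" for k
  proof (rule eq_matI)
    fix i j assume "i < dim_row (0\<^sub>m n n :: complex mat)" "j < dim_col (0\<^sub>m n n :: complex mat)"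
    thus "Am k $$ (i,j) = 0\<^sub>m n n $$ (i,j)" using that unfolding Am_def by auto
  qed (auto simp: Am_def)
  hence neg: "is_poly_neg n Am"
    unfolding is_poly_neg_def is_laurent_def using car fin by blast
  have "leval_inv n Am w = Mw w" for w
  proof -
    have "leval_inv n Am w = mat n n (\<lambda>(i,j). \<Sum>k\<in>{-int N..0}. w ^ nat (-k) * Am k $$ (i,j))"
      by (rule leval_inv_alt[OF _ sub car]) simp
    also have "\<dots> = Mw w"
    proof (rule eq_matI)
      fix i j assume "i < dim_row (Mw w)" "j < dim_col (Mw w)"
      hence ij: "i < n" "j < n" using assms mpolyD(1)[of n Mw w] by auto
      have "(\<Sum>k\<in>{-int N..0}. w ^ nat (-k) * Am k $$ (i,j)) = (\<Sum>m\<le>N. w ^ m * coeff (pp i j) m)"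
        unfolding sum_neg_reindex using ij by (simp add: Am_def)
      also have "\<dots> = (\<Sum>m\<le>degree (pp i j). w ^ m * coeff (pp i j) m)"
        by (rule sum.mono_neutral_right) (use dN[OF ij] in \<open>auto simp: coeff_eq_0\<close>)
      also have "\<dots> = poly (pp i j) w" by (simp add: poly_altdef mult.commute)
      also have "\<dots> = Mw w $$ (i,j)" using pp[OF ij] by metis
      finally show "mat n n (\<lambda>(i,j). \<Sum>k\<in>{-int N..0}. w ^ nat (-k) * Am k $$ (i,j)) $$ (i, j) = Mw w $$ (i, j)"
        using ij by simp
    qed (use assms mpolyD(1)[of n Mw w] in auto)
    finally show ?thesis .
  qed
  thus ?thesis using neg by blast
qed

lemma neg_unique:
  assumes C: "is_poly_neg n C" and C': "is_poly_neg n C'"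
    and eq: "\<forall>w. leval_inv n C w = leval_inv n C' w"
  shows "C = C'"
proof
  fix k
  have fin: "finite (lsupp n C \<union> lsupp n C')" using C C' by (simp add: is_poly_neg_def is_laurent_def)
  then obtain N where N: "\<forall>k\<in>lsupp n C \<union> lsupp n C'. - int N \<le> k" using finite_int_bound by blast
  have sub: "lsupp n C \<subseteq> {-int N..0}" "lsupp n C' \<subseteq> {-int N..0}"
    using N lsupp_neg[OF C] lsupp_neg[OF C'] by auto
  have car: "\<forall>k. C k \<in> carrier_mat n n" "\<forall>k. C' k \<in> carrier_mat n n"
    using C C' by (auto simp: is_poly_neg_def is_laurent_def)
  have coef: "C k $$ (i,j) = C' k $$ (i,j)" if ij: "i < n" "j < n" for i j
  proof -
    define pc where "pc = (\<lambda>D::int \<Rightarrow> complex mat. \<Sum>m\<le>N. monom (D (- int m) $$ (i,j)) m)"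
    have ev: "poly (pc D) w = leval_inv n D w $$ (i,j)" if "lsupp n D \<subseteq> {-int N..0}" "\<forall>k. D k \<in> carrier_mat n n" for D w
    proof -
      have "leval_inv n D w $$ (i,j) = (\<Sum>k\<in>{-int N..0}. w ^ nat (-k) * D k $$ (i,j))"
        using leval_inv_alt[OF _ that, of w] ij by simp
      also have "\<dots> = (\<Sum>m\<le>N. w ^ m * D (- int m) $$ (i,j))" unfolding sum_neg_reindex by simp
      finally show ?thesis unfolding pc_def by (simp add: poly_sum poly_monom mult.commute)
    qed
    have "poly (pc C) = poly (pc C')" using ev[OF sub(1) car(1)] ev[OF sub(2) car(2)] eq by auto
    hence pe: "pc C = pc C'" using poly_eq_poly_eq_iff by blast
    have cc: "coeff (pc D) m = (if m \<le> N then D (- int m) $$ (i,j) else 0)" for D m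
      unfolding pc_def by (simp add: coeff_sum coeff_monom)
    show ?thesis
    proof (cases "k \<le> 0 \<and> - int N \<le> k")
      case True
      have "coeff (pc C) (nat (-k)) = coeff (pc C') (nat (-k))" using pe by simp
      thus ?thesis using True unfolding cc by (auto split: if_splits)
    next
      case False
      hence "k \<notin> lsupp n C" "k \<notin> lsupp n C'" using sub by auto
      thus ?thesis using ij by (simp add: lsupp_def)
    qed
  qed
  have ck: "C k \<in> carrier_mat n n" "C' k \<in> carrier_mat n n" using car by blast+
  show "C k = C' k"
  proof (rule eq_matI)
    fix i j assume "i < dim_row (C' k)" "j < dim_col (C' k)"
    hence "i < n" "j < n" using ck by auto
    thus "C k $$ (i,j) = C' k $$ (i,j)" by (rule coef)
  next
    show "dim_row (C k) = dim_row (C' k)" "dim_col (C k) = dim_col (C' k)" using ck by auto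
  qed
qed




interpretation cnjh: comm_ring_hom cnj
  by unfold_locales auto

definition flip :: "nat \<Rightarrow> nat" where "flip i = (if even i then Suc i else i - 1)"
definition sg :: "nat \<Rightarrow> complex" where "sg i = (if even i then - \<i> else \<i>)"

lemma parity_cases: fixes i :: nat obtains a where "i = 2*a" | a where "i = 2*a + 1"
  by (metis evenE oddE)

lemma flip_even[simp]: "flip (2*a) = 2*a + 1" unfolding flip_def by simp
lemma flip_odd[simp]: "flip (2*a+1) = 2*a" "flip (Suc (2*a)) = 2*a" unfolding flip_def by simp_all
lemma sg_even[simp]: "sg (2*a) = - \<i>" unfolding sg_def by simp
lemma sg_odd[simp]: "sg (2*a+1) = \<i>" "sg (Suc (2*a)) = \<i>" unfolding sg_def by simp_all

lemma flip_lt: "i < 2*d \<Longrightarrow> flip i < 2*d"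
  by (cases i rule: parity_cases) auto
lemma flip_flip[simp]: "flip (flip i) = i"
  by (cases i rule: parity_cases) auto
lemma flip_div[simp]: "flip i div 2 = i div 2"
  by (cases i rule: parity_cases) auto
lemma flip_eq_iff: "flip i = j \<longleftrightarrow> i = flip j"
  by (metis flip_flip)

lemma Jq_carrier[simp]: "Jq d \<in> carrier_mat (2*d) (2*d)"
  unfolding Jq_def by auto
lemma Jq_dim[simp]: "dim_row (Jq d) = 2*d" "dim_col (Jq d) = 2*d"
  unfolding Jq_def by auto

lemma Jq_entry: "i < 2*d \<Longrightarrow> j < 2*d \<Longrightarrow> Jq d $$ (i,j) = (if j = flip i then sg i else 0)"
proof -
  assume ij: "i < 2*d" "j < 2*d"
  have "(if i div 2 = j div 2 then
      (if i mod 2 = 0 \<and> j mod 2 = 1 then - \<i> else if i mod 2 = 1 \<and> j mod 2 = 0 then \<i> else 0)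
    else 0) = (if j = flip i then sg i else 0)"
    by (cases i rule: parity_cases; cases j rule: parity_cases) auto
  thus ?thesis unfolding Jq_def using ij by simp
qed

lemma Jq_left: assumes X: "X \<in> carrier_mat (2*d) m" and ij: "i < 2*d" "j < m"
  shows "(Jq d * X) $$ (i,j) = sg i * X $$ (flip i, j)"
proof -
  have "(Jq d * X) $$ (i,j) = (\<Sum>k\<in>{0..<2*d}. Jq d $$ (i,k) * X $$ (k,j))"
    using X ij by (simp add: scalar_prod_def)
  also have "\<dots> = (\<Sum>k\<in>{0..<2*d}. if k = flip i then sg i * X $$ (k,j) else 0)"
    by (rule sum.cong[OF refl]) (use ij in \<open>auto simp: Jq_entry\<close>)
  also have "\<dots> = sg i * X $$ (flip i, j)" using flip_lt[OF ij(1)] by simp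
  finally show ?thesis .
qed

lemma Jq_right: assumes X: "X \<in> carrier_mat m (2*d)" and ij: "i < m" "j < 2*d"
  shows "(X * Jq d) $$ (i,j) = X $$ (i, flip j) * sg (flip j)"
proof -
  have "(X * Jq d) $$ (i,j) = (\<Sum>k\<in>{0..<2*d}. X $$ (i,k) * Jq d $$ (k,j))"
    using X ij by (simp add: scalar_prod_def)
  also have "\<dots> = (\<Sum>k\<in>{0..<2*d}. if k = flip j then X $$ (i,k) * sg k else 0)"
    by (rule sum.cong[OF refl]) (use ij in \<open>auto simp: Jq_entry flip_eq_iff\<close>)
  also have "\<dots> = X $$ (i, flip j) * sg (flip j)" using flip_lt[OF ij(2)] by simp
  finally show ?thesis .
qed

lemma sg_flip: "sg i * sg (flip i) = 1"
  unfolding sg_def flip_def by auto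

lemma Jq_Jq: "Jq d * Jq d = 1\<^sub>m (2*d)"
proof (rule eq_matI)
  fix i j assume "i < dim_row (1\<^sub>m (2*d) :: complex mat)" "j < dim_col (1\<^sub>m (2*d) :: complex mat)"
  hence ij: "i < 2*d" "j < 2*d" by auto
  have "(Jq d * Jq d) $$ (i,j) = sg i * Jq d $$ (flip i, j)" by (rule Jq_left) (use ij in auto)
  also have "\<dots> = (if i = j then 1 else 0)"
    using ij flip_lt[OF ij(1)] sg_flip[of i] by (auto simp: Jq_entry flip_eq_iff)
  finally show "(Jq d * Jq d) $$ (i,j) = 1\<^sub>m (2*d) $$ (i,j)" using ij by simp
qed auto

lemma Jq_cnj: "map_mat cnj (Jq d) = (-1) \<cdot>\<^sub>m Jq d"
proof (rule eq_matI)
  fix i j assume "i < dim_row ((-1) \<cdot>\<^sub>m Jq d)" "j < dim_col ((-1) \<cdot>\<^sub>m Jq d)"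
  hence ij: "i < 2*d" "j < 2*d" by auto
  show "map_mat cnj (Jq d) $$ (i,j) = ((-1) \<cdot>\<^sub>m Jq d) $$ (i,j)"
    using ij by (simp add: Jq_entry sg_def)
qed auto

definition Jf :: "fld \<Rightarrow> nat \<Rightarrow> complex mat" where
  "Jf F d = (if F = FH then Jq d else 1\<^sub>m (blk F * d))"

definition eps :: "fld \<Rightarrow> complex" where "eps F = (if F = FH then -1 else 1)"

lemma blk_FH: "blk FH = 2" and blk_nFH: "F \<noteq> FH \<Longrightarrow> blk F = 1"
  unfolding blk_def by auto

lemma Jf_carrier[simp]: "Jf F d \<in> carrier_mat (blk F * d) (blk F * d)"
  unfolding Jf_def by (auto simp: blk_FH)

lemma Jf_Jf: "Jf F d * Jf F d = 1\<^sub>m (blk F * d)"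
  unfolding Jf_def by (auto simp: blk_FH Jq_Jq)

lemma Jf_cnj: "map_mat cnj (Jf F d) = eps F \<cdot>\<^sub>m Jf F d"
  unfolding Jf_def eps_def by (auto simp: Jq_cnj cnjh.mat_hom_one)

lemma eps_sq: "eps F * eps F = 1" unfolding eps_def by auto

lemma smult_smult_mat[simp]: "a \<cdot>\<^sub>m (b \<cdot>\<^sub>m A) = (a * b) \<cdot>\<^sub>m (A :: complex mat)"
  by (intro eq_matI) auto

lemma one_smult_mat'[simp]: "1 \<cdot>\<^sub>m A = (A :: complex mat)"
  by (intro eq_matI) auto

definition sharp :: "fld \<Rightarrow> nat \<Rightarrow> complex mat \<Rightarrow> complex mat" where
  "sharp F d X = Jf F d * map_mat cnj X * Jf F d"

lemma sq_mult[simp]: "A \<in> carrier_mat n n \<Longrightarrow> B \<in> carrier_mat n n \<Longrightarrow> A * B \<in> carrier_mat n n"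
  by auto

context fixes F d n assumes n: "n = blk F * d"
begin

lemmas sq_assoc = assoc_mult_mat[of _ n n _ n _ n]
lemmas smd = mult_smult_distrib[of _ n n _ n] mult_smult_assoc_mat[of _ n n _ n]
declare smult_carrier_mat[simp]

lemma zero_mults[simp]: "A \<in> carrier_mat n n \<Longrightarrow> A * 0\<^sub>m n n = 0\<^sub>m n n"
  "A \<in> carrier_mat n n \<Longrightarrow> 0\<^sub>m n n * A = 0\<^sub>m n n" by auto

lemma J_car[simp]: "Jf F d \<in> carrier_mat n n" using n by simp

lemma JJ_left: "Z \<in> carrier_mat n n \<Longrightarrow> Jf F d * (Jf F d * Z) = Z"
proof -
  assume Z: "Z \<in> carrier_mat n n"
  have "Jf F d * (Jf F d * Z) = (Jf F d * Jf F d) * Z" using Z by (simp add: sq_assoc)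
  also have "\<dots> = Z" unfolding Jf_Jf n[symmetric] using Z by simp
  finally show ?thesis .
qed

lemma sharp_carrier[simp]: "X \<in> carrier_mat n n \<Longrightarrow> sharp F d X \<in> carrier_mat n n"
  unfolding sharp_def by simp

lemma cnj_cnj_mat[simp]: "map_mat cnj (map_mat cnj X) = X"
  by (intro eq_matI) auto

lemma cnj_zero_mat[simp]: "map_mat cnj (0\<^sub>m n n) = 0\<^sub>m n n"
  by (intro eq_matI) auto

lemma sharp_mult: assumes X: "X \<in> carrier_mat n n" and Y: "Y \<in> carrier_mat n n"
  shows "sharp F d (X * Y) = sharp F d X * sharp F d Y"
proof -
  let ?J = "Jf F d"
  have cX[simp]: "map_mat cnj X \<in> carrier_mat n n" and cY[simp]: "map_mat cnj Y \<in> carrier_mat n n" using X Y by auto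
  have "sharp F d X * sharp F d Y = ?J * (map_mat cnj X * (?J * (?J * (map_mat cnj Y * ?J))))"
    unfolding sharp_def using X Y by (simp add: sq_assoc)
  also have "\<dots> = ?J * (map_mat cnj X * (map_mat cnj Y * ?J))"
    using X Y by (simp add: JJ_left)
  also have "\<dots> = sharp F d (X * Y)"
    unfolding sharp_def using cnjh.mat_hom_mult[OF X Y] X Y by (simp add: sq_assoc)
  finally show ?thesis by simp
qed

lemma sharp_sharp: assumes X: "X \<in> carrier_mat n n" shows "sharp F d (sharp F d X) = X"
proof -
  let ?J = "Jf F d"
  have cX[simp]: "map_mat cnj X \<in> carrier_mat n n" using X by auto
  have cJ[simp]: "map_mat cnj ?J \<in> carrier_mat n n" by auto
  have "map_mat cnj (sharp F d X) = map_mat cnj ?J * X * map_mat cnj ?J"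
    unfolding sharp_def using X
    by (simp add: cnjh.mat_hom_mult[of _ n n _ n])
  also have "\<dots> = (eps F * eps F) \<cdot>\<^sub>m (?J * X * ?J)"
    unfolding Jf_cnj using X by (simp add: smd)
  finally have e: "map_mat cnj (sharp F d X) = ?J * X * ?J" by (simp add: eps_sq)
  have "sharp F d (sharp F d X) = ?J * map_mat cnj (sharp F d X) * ?J" by (simp add: sharp_def)
  also have "\<dots> = ?J * (?J * (X * (?J * ?J)))"
    unfolding e using X by (simp add: sq_assoc)
  also have "\<dots> = X" using X by (simp add: JJ_left Jf_Jf n[symmetric])
  finally show ?thesis .
qed

lemma sharp_det: assumes X: "X \<in> carrier_mat n n" shows "det (sharp F d X) = cnj (det X)"
proof -
  have J: "Jf F d \<in> carrier_mat n n" by simp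
  have "det (Jf F d) * det (Jf F d) = 1" using det_mult[OF J J] unfolding Jf_Jf n[symmetric] by simp
  thus ?thesis unfolding sharp_def using J X
    by (simp add: det_mult[of _ n] cnjh.hom_det)
qed

lemma sharp_zero[simp]: "sharp F d (0\<^sub>m n n) = 0\<^sub>m n n"
  unfolding sharp_def by simp

lemma sharp_zero_iff: assumes X: "X \<in> carrier_mat n n" shows "sharp F d X = 0\<^sub>m n n \<longleftrightarrow> X = 0\<^sub>m n n"
proof
  assume "sharp F d X = 0\<^sub>m n n"
  hence "sharp F d (sharp F d X) = 0\<^sub>m n n" by simp
  thus "X = 0\<^sub>m n n" using sharp_sharp[OF X] by simp
qed simp

lemma sharp_lin: assumes X: "X \<in> carrier_mat n n" and Y: "Y \<in> carrier_mat n n"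
  shows "sharp F d (a \<cdot>\<^sub>m X + b \<cdot>\<^sub>m Y) = cnj a \<cdot>\<^sub>m sharp F d X + cnj b \<cdot>\<^sub>m sharp F d Y"
proof -
  let ?J = "Jf F d"
  have [simp]: "map_mat cnj X \<in> carrier_mat n n" "map_mat cnj Y \<in> carrier_mat n n" using X Y by auto
  have e: "map_mat cnj (a \<cdot>\<^sub>m X + b \<cdot>\<^sub>m Y) = cnj a \<cdot>\<^sub>m map_mat cnj X + cnj b \<cdot>\<^sub>m map_mat cnj Y"
    using X Y by (intro eq_matI) auto
  have "?J * (cnj a \<cdot>\<^sub>m map_mat cnj X + cnj b \<cdot>\<^sub>m map_mat cnj Y) * ?J
     = (?J * (cnj a \<cdot>\<^sub>m map_mat cnj X) + ?J * (cnj b \<cdot>\<^sub>m map_mat cnj Y)) * ?J"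
    using X Y by (subst mult_add_distrib_mat[of _ n n _ n]) auto
  also have "\<dots> = ?J * (cnj a \<cdot>\<^sub>m map_mat cnj X) * ?J + ?J * (cnj b \<cdot>\<^sub>m map_mat cnj Y) * ?J"
    using X Y by (subst add_mult_distrib_mat[of _ n n _ _ n]) auto
  also have "\<dots> = cnj a \<cdot>\<^sub>m (?J * map_mat cnj X * ?J) + cnj b \<cdot>\<^sub>m (?J * map_mat cnj Y * ?J)"
    using X Y by (simp add: smd)
  finally show ?thesis unfolding sharp_def e .
qed

end




lemma cnj_powi: "cnj (z powi k) = cnj z powi k"
  by (cases "k \<ge> 0") (auto simp: power_int_def)

lemma lin_left: fixes f :: "'k \<Rightarrow> complex" assumes U: "U \<in> carrier_mat n n" and B: "\<forall>k. B k \<in> carrier_mat n n"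
  shows "U * mat n n (\<lambda>(i,j). \<Sum>k\<in>S. f k * B k $$ (i,j)) = mat n n (\<lambda>(i,j). \<Sum>k\<in>S. f k * (U * B k) $$ (i,j))"
proof (rule eq_matI)
  fix i j assume "i < dim_row (mat n n (\<lambda>(i,j). \<Sum>k\<in>S. f k * (U * B k) $$ (i,j)))"
    "j < dim_col (mat n n (\<lambda>(i,j). \<Sum>k\<in>S. f k * (U * B k) $$ (i,j)))"
  hence ij: "i < n" "j < n" by auto
  have Bk: "B k \<in> carrier_mat n n" for k using B by blast
  have Bd[simp]: "dim_row (B k) = n" "dim_col (B k) = n" for k using Bk[of k] by auto
  have "(U * mat n n (\<lambda>(i,j). \<Sum>k\<in>S. f k * B k $$ (i,j))) $$ (i,j)
      = (\<Sum>a\<in>{0..<n}. U $$ (i,a) * (\<Sum>k\<in>S. f k * B k $$ (a,j)))"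
    using U ij by (simp add: scalar_prod_def)
  also have "\<dots> = (\<Sum>a\<in>{0..<n}. \<Sum>k\<in>S. f k * (U $$ (i,a) * B k $$ (a,j)))"
    unfolding sum_distrib_left by (intro sum.cong refl) (simp add: mult_ac)
  also have "\<dots> = (\<Sum>k\<in>S. \<Sum>a\<in>{0..<n}. f k * (U $$ (i,a) * B k $$ (a,j)))"
    by (rule sum.swap)
  also have "\<dots> = (\<Sum>k\<in>S. f k * (\<Sum>a\<in>{0..<n}. U $$ (i,a) * B k $$ (a,j)))"
    by (simp add: sum_distrib_left)
  also have "\<dots> = (\<Sum>k\<in>S. f k * (U * B k) $$ (i,j))"
    using U Bk ij by (simp add: scalar_prod_def)
  finally show "(U * mat n n (\<lambda>(i,j). \<Sum>k\<in>S. f k * B k $$ (i,j))) $$ (i,j) = mat n n (\<lambda>(i,j). \<Sum>k\<in>S. f k * (U * B k) $$ (i,j)) $$ (i,j)"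
    using ij by simp
qed (use U in auto)

lemma lin_right: fixes f :: "'k \<Rightarrow> complex" assumes U: "U \<in> carrier_mat n n" and B: "\<forall>k. B k \<in> carrier_mat n n"
  shows "mat n n (\<lambda>(i,j). \<Sum>k\<in>S. f k * B k $$ (i,j)) * U = mat n n (\<lambda>(i,j). \<Sum>k\<in>S. f k * (B k * U) $$ (i,j))"
proof (rule eq_matI)
  fix i j assume "i < dim_row (mat n n (\<lambda>(i,j). \<Sum>k\<in>S. f k * (B k * U) $$ (i,j)))"
    "j < dim_col (mat n n (\<lambda>(i,j). \<Sum>k\<in>S. f k * (B k * U) $$ (i,j)))"
  hence ij: "i < n" "j < n" by auto
  have Bk: "B k \<in> carrier_mat n n" for k using B by blast
  have Bd[simp]: "dim_row (B k) = n" "dim_col (B k) = n" for k using Bk[of k] by auto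
  have "(mat n n (\<lambda>(i,j). \<Sum>k\<in>S. f k * B k $$ (i,j)) * U) $$ (i,j)
      = (\<Sum>a\<in>{0..<n}. (\<Sum>k\<in>S. f k * B k $$ (i,a)) * U $$ (a,j))"
    using U ij by (simp add: scalar_prod_def)
  also have "\<dots> = (\<Sum>a\<in>{0..<n}. \<Sum>k\<in>S. f k * (B k $$ (i,a) * U $$ (a,j)))"
    by (simp add: sum_distrib_right mult.assoc)
  also have "\<dots> = (\<Sum>k\<in>S. \<Sum>a\<in>{0..<n}. f k * (B k $$ (i,a) * U $$ (a,j)))"
    by (rule sum.swap)
  also have "\<dots> = (\<Sum>k\<in>S. f k * (\<Sum>a\<in>{0..<n}. B k $$ (i,a) * U $$ (a,j)))"
    by (simp add: sum_distrib_left)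
  also have "\<dots> = (\<Sum>k\<in>S. f k * (B k * U) $$ (i,j))"
    using U Bk ij by (simp add: scalar_prod_def)
  finally show "(mat n n (\<lambda>(i,j). \<Sum>k\<in>S. f k * B k $$ (i,j)) * U) $$ (i,j) = mat n n (\<lambda>(i,j). \<Sum>k\<in>S. f k * (B k * U) $$ (i,j)) $$ (i,j)"
    using ij by simp
qed (use U in auto)

lemma lin_cnj: fixes f :: "'k \<Rightarrow> complex" assumes "\<forall>k. B k \<in> carrier_mat n n"
  shows "map_mat cnj (mat n n (\<lambda>(i,j). \<Sum>k\<in>S. f k * B k $$ (i,j)))
   = mat n n (\<lambda>(i,j). \<Sum>k\<in>S. cnj (f k) * map_mat cnj (B k) $$ (i,j))"
proof -
  have Bd[simp]: "dim_row (B k) = n" "dim_col (B k) = n" for k using assms by auto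
  show ?thesis by (intro eq_matI) (auto simp: cnj_sum)
qed

context fixes F d n assumes n: "n = blk F * d"
begin

lemma lsupp_sharp: "\<forall>k. C k \<in> carrier_mat n n \<Longrightarrow> lsupp n (\<lambda>k. sharp F d (C k)) = lsupp n C"
  unfolding lsupp_def using sharp_zero_iff[OF n] by auto

lemma sharp_matsum: assumes B: "\<forall>k. B k \<in> carrier_mat n n"
  shows "sharp F d (mat n n (\<lambda>(i,j). \<Sum>k\<in>S. f k * B k $$ (i,j)))
     = mat n n (\<lambda>(i,j). \<Sum>k\<in>S. cnj (f k) * sharp F d (B k) $$ (i,j))"
proof -
  have J: "Jf F d \<in> carrier_mat n n" using n by simp
  have cB: "\<forall>k. map_mat cnj (B k) \<in> carrier_mat n n" using B by auto
  have cB2: "\<forall>k. Jf F d * map_mat cnj (B k) \<in> carrier_mat n n" using B J by auto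
  show ?thesis unfolding sharp_def lin_cnj[OF B] lin_left[OF J cB] lin_right[OF J cB2] ..
qed

lemma leval_sharp: assumes C: "\<forall>k. C k \<in> carrier_mat n n" "finite (lsupp n C)"
  shows "leval n (\<lambda>k. sharp F d (C k)) z = sharp F d (leval n C (cnj z))"
proof -
  have C': "\<forall>k. sharp F d (C k) \<in> carrier_mat n n" using C sharp_carrier[OF n] by auto
  show ?thesis
    unfolding leval_alt[OF C(2) subset_refl C(1)] sharp_matsum[OF C(1)]
      leval_alt[OF C(2) equalityD1[OF lsupp_sharp[OF C(1)]] C']
    by (simp add: cnj_powi)
qed

lemma leval_inv_sharp: assumes C: "\<forall>k. C k \<in> carrier_mat n n" "finite (lsupp n C)"
  shows "leval_inv n (\<lambda>k. sharp F d (C k)) z = sharp F d (leval_inv n C (cnj z))"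
proof -
  have C': "\<forall>k. sharp F d (C k) \<in> carrier_mat n n" using C sharp_carrier[OF n] by auto
  show ?thesis
    unfolding leval_inv_alt[OF C(2) subset_refl C(1)] sharp_matsum[OF C(1)]
      leval_inv_alt[OF C(2) equalityD1[OF lsupp_sharp[OF C(1)]] C']
    by simp
qed

lemma in_Fd_iff: assumes "F \<noteq> FC"
  shows "in_Fd F d Q \<longleftrightarrow> Q \<in> carrier_mat n n \<and> sharp F d Q = Q"
proof (cases "F = FH")
  case True
  thus ?thesis unfolding in_Fd_def sharp_def Jf_def n by auto
next
  case False
  hence FR: "F = FR" using assms by (cases F) auto
  have "Q \<in> carrier_mat n n \<Longrightarrow> sharp F d Q = map_mat cnj Q"
    unfolding sharp_def Jf_def using FR n by simp
  thus ?thesis unfolding in_Fd_def using FR n by auto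
qed

end

lemma leval_lin: assumes C: "\<forall>k. C k \<in> carrier_mat n n" "finite (lsupp n C)"
  and C': "\<forall>k. C' k \<in> carrier_mat n n" "finite (lsupp n C')"
  shows "leval n (\<lambda>k. a \<cdot>\<^sub>m C k + b \<cdot>\<^sub>m C' k) z = a \<cdot>\<^sub>m leval n C z + b \<cdot>\<^sub>m leval n C' z"
proof -
  let ?S = "lsupp n C \<union> lsupp n C'"
  have f: "finite ?S" using C C' by auto
  have car: "\<forall>k. a \<cdot>\<^sub>m C k + b \<cdot>\<^sub>m C' k \<in> carrier_mat n n" using C C' by auto
  have sub: "lsupp n (\<lambda>k. a \<cdot>\<^sub>m C k + b \<cdot>\<^sub>m C' k) \<subseteq> ?S"
  proof
    fix k assume k: "k \<in> lsupp n (\<lambda>k. a \<cdot>\<^sub>m C k + b \<cdot>\<^sub>m C' k)"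
    show "k \<in> ?S"
    proof (rule ccontr)
      assume "k \<notin> ?S"
      hence "C k = 0\<^sub>m n n" "C' k = 0\<^sub>m n n" unfolding lsupp_def by auto
      hence "a \<cdot>\<^sub>m C k + b \<cdot>\<^sub>m C' k = 0\<^sub>m n n" by (intro eq_matI) auto
      thus False using k unfolding lsupp_def by auto
    qed
  qed
  have Cd[simp]: "dim_row (C k) = n" "dim_col (C k) = n" "dim_row (C' k) = n" "dim_col (C' k) = n" for k
    using C C' by auto
  show ?thesis
    unfolding leval_alt[OF f sub car] leval_alt[OF f Un_upper1 C(1)] leval_alt[OF f Un_upper2 C'(1)]
  proof (rule eq_matI)
    fix i j assume "i < dim_row (a \<cdot>\<^sub>m mat n n (\<lambda>(i, j). \<Sum>k\<in>?S. z powi k * C k $$ (i, j)) +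
        b \<cdot>\<^sub>m mat n n (\<lambda>(i, j). \<Sum>k\<in>?S. z powi k * C' k $$ (i, j)))"
      "j < dim_col (a \<cdot>\<^sub>m mat n n (\<lambda>(i, j). \<Sum>k\<in>?S. z powi k * C k $$ (i, j)) +
        b \<cdot>\<^sub>m mat n n (\<lambda>(i, j). \<Sum>k\<in>?S. z powi k * C' k $$ (i, j)))"
    hence ij: "i < n" "j < n" by auto
    thus "mat n n (\<lambda>(i, j). \<Sum>k\<in>?S. z powi k * (a \<cdot>\<^sub>m C k + b \<cdot>\<^sub>m C' k) $$ (i, j)) $$ (i, j) =
      (a \<cdot>\<^sub>m mat n n (\<lambda>(i, j). \<Sum>k\<in>?S. z powi k * C k $$ (i, j)) +
        b \<cdot>\<^sub>m mat n n (\<lambda>(i, j). \<Sum>k\<in>?S. z powi k * C' k $$ (i, j))) $$ (i, j)"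
      by (simp add: sum_distrib_left sum.distrib algebra_simps)
  qed auto
qed




lemma expand_len: "length (expand_idx F K) = blk F * length K"
proof -
  have "length (concat (map (\<lambda>k. [k, k]) K)) = 2 * length K" by (induction K) auto
  thus ?thesis unfolding expand_idx_def blk_def by auto
qed

lemma concat_pairs_nth: "i < 2 * length K \<Longrightarrow> concat (map (\<lambda>k. [k, k]) K) ! i = K ! (i div 2)"
proof (induction K arbitrary: i)
  case Nil thus ?case by simp
next
  case (Cons a K)
  show ?case
  proof (cases "i < 2")
    case True
    hence "i = 0 \<or> i = 1" by auto
    thus ?thesis by auto
  next
    case False
    define m where "m = i - 2"
    have m: "i = Suc (Suc m)" using False unfolding m_def by simp
    have "m < 2 * length K" using Cons(2) m by simp
    hence "concat (map (\<lambda>k. [k, k]) K) ! m = K ! (m div 2)" using Cons(1) by blast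
    thus ?thesis unfolding m by simp

  qed
qed

lemma expand_nth: "i < blk F * length K \<Longrightarrow> expand_idx F K ! i = K ! (i div blk F)"
proof -
  assume i: "i < blk F * length K"
  show ?thesis
  proof (cases "F = FH")
    case True thus ?thesis using i concat_pairs_nth[of i K] by (simp add: expand_idx_def blk_def)
  next
    case False thus ?thesis using i by (simp add: expand_idx_def blk_def)
  qed
qed

lemma D_F_eq: "D_F F K z = diag_pow (expand_idx F K) z"
  unfolding D_F_def diag_pow_def expand_len by (intro eq_matI) (auto simp: expand_nth)

lemma diag_car[simp]: "diag_pow ks z \<in> carrier_mat (length ks) (length ks)"
  unfolding diag_pow_def by auto
lemma diag_dim[simp]: "dim_row (diag_pow ks z) = length ks" "dim_col (diag_pow ks z) = length ks"
  unfolding diag_pow_def by auto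

lemma diag_left: assumes X: "X \<in> carrier_mat (length ks) m" and ij: "i < length ks" "j < m"
  shows "(diag_pow ks z * X) $$ (i,j) = z powi (ks!i) * X $$ (i,j)"
proof -
  have "(diag_pow ks z * X) $$ (i,j) = (\<Sum>k\<in>{0..<length ks}. diag_pow ks z $$ (i,k) * X $$ (k,j))"
    using X ij by (simp add: scalar_prod_def)
  also have "\<dots> = (\<Sum>k\<in>{0..<length ks}. (if k = i then z powi (ks!i) * X $$ (k,j) else 0))"
    using ij by (intro sum.cong) (auto simp: diag_pow_def)
  finally have "(diag_pow ks z * X) $$ (i,j) = (\<Sum>k\<in>{0..<length ks}. (if k = i then z powi (ks!i) * X $$ (k,j) else 0))" .
  thus ?thesis using ij by simp
qed

lemma diag_right: assumes X: "X \<in> carrier_mat m (length ks)" and ij: "i < m" "j < length ks"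
  shows "(X * diag_pow ks z) $$ (i,j) = X $$ (i,j) * z powi (ks!j)"
proof -
  have "(X * diag_pow ks z) $$ (i,j) = (\<Sum>k\<in>{0..<length ks}. X $$ (i,k) * diag_pow ks z $$ (k,j))"
    using X ij by (simp add: scalar_prod_def)
  also have "\<dots> = (\<Sum>k\<in>{0..<length ks}. (if k = j then X $$ (i,k) * z powi (ks!j) else 0))"
    using ij by (intro sum.cong) (auto simp: diag_pow_def)
  finally have "(X * diag_pow ks z) $$ (i,j) = (\<Sum>k\<in>{0..<length ks}. (if k = j then X $$ (i,k) * z powi (ks!j) else 0))" .
  thus ?thesis using ij by simp
qed

lemma det_diag: assumes "z \<noteq> 0" shows "det (diag_pow ks z) \<noteq> 0"
proof -
  have ut: "upper_triangular (diag_pow ks z)" unfolding upper_triangular_def diag_pow_def by auto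
  have "det (diag_pow ks z) = (\<Prod>i = 0..<length ks. z powi (ks ! i))"
    using det_upper_triangular[OF ut diag_car] by (simp add: prod_list_diag_prod diag_pow_def)
  thus ?thesis using assms by simp
qed

lemma cnj_diag: "map_mat cnj (diag_pow ks z) = diag_pow ks (cnj z)"
  unfolding diag_pow_def by (intro eq_matI) (auto simp: cnj_powi)

lemma J_diag_comm: assumes len: "length ks = blk F * d"
  and same: "F = FH \<Longrightarrow> (\<And>i j. i < length ks \<Longrightarrow> j < length ks \<Longrightarrow> i div 2 = j div 2 \<Longrightarrow> ks ! i = ks ! j)"
  shows "Jf F d * diag_pow ks z = diag_pow ks z * Jf F d"
proof (cases "F = FH")
  case False
  thus ?thesis unfolding Jf_def using len by simp
next
  case True
  have L: "length ks = 2 * d" using len True by (simp add: blk_FH)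
  show ?thesis unfolding Jf_def using True
  proof (simp, intro eq_matI)
    fix i j assume "i < dim_row (diag_pow ks z * Jq d)" "j < dim_col (diag_pow ks z * Jq d)"
    hence ij: "i < 2*d" "j < 2*d" using L by auto
    have l: "(Jq d * diag_pow ks z) $$ (i,j) = sg i * diag_pow ks z $$ (flip i, j)"
      by (rule Jq_left) (use ij L in auto)
    have r: "(diag_pow ks z * Jq d) $$ (i,j) = diag_pow ks z $$ (i, flip j) * sg (flip j)"
      by (rule Jq_right) (use ij L in auto)
    have fl: "flip i < 2*d" "flip j < 2*d" using ij flip_lt by auto
    show "(Jq d * diag_pow ks z) $$ (i,j) = (diag_pow ks z * Jq d) $$ (i,j)"
    proof (cases "j = flip i")
      case True
      have "flip i div 2 = i div 2" by simp
      hence "ks ! (flip i) = ks ! i" using same[OF \<open>F = FH\<close>, of "flip i" i] ij fl L by simp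
      thus ?thesis unfolding l r using ij fl L by (simp add: True diag_pow_def mult.commute)
    next
      case False
      hence "i \<noteq> flip j" by auto
      thus ?thesis unfolding l r using ij fl L False by (simp add: diag_pow_def)
    qed
  qed (use L in auto)
qed

lemma sharp_diag: assumes len: "length ks = blk F * d"
  and same: "F = FH \<Longrightarrow> (\<And>i j. i < length ks \<Longrightarrow> j < length ks \<Longrightarrow> i div 2 = j div 2 \<Longrightarrow> ks ! i = ks ! j)"
  shows "sharp F d (diag_pow ks z) = diag_pow ks (cnj z)"
proof -
  let ?n = "blk F * d"
  let ?D = "diag_pow ks (cnj z)"
  let ?J = "Jf F d"
  have D: "?D \<in> carrier_mat ?n ?n" using diag_car[of ks "cnj z"] unfolding len .
  have J: "?J \<in> carrier_mat ?n ?n" by simp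
  have c: "?J * ?D = ?D * ?J" by (rule J_diag_comm[OF len same])
  have "sharp F d (diag_pow ks z) = ?J * ?D * ?J" unfolding sharp_def cnj_diag ..
  also have "\<dots> = ?D * ?J * ?J" by (simp only: c)
  also have "\<dots> = ?D * (?J * ?J)" by (rule assoc_mult_mat[OF D J J])
  also have "\<dots> = ?D * 1\<^sub>m ?n" by (simp only: Jf_Jf)
  also have "\<dots> = ?D" by (rule right_mult_one_mat[OF D])
  finally show ?thesis .
qed

lemma expand_same: "F = FH \<Longrightarrow> i < length (expand_idx F K) \<Longrightarrow> j < length (expand_idx F K) \<Longrightarrow>
   i div 2 = j div 2 \<Longrightarrow> expand_idx F K ! i = expand_idx F K ! j"
  using expand_nth[of i F K] expand_nth[of j F K] by (simp add: expand_len blk_FH)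

lemma cancel_left: fixes X :: "complex mat" assumes X: "X \<in> carrier_mat n n" and dX: "det X \<noteq> 0"
  and Y: "Y \<in> carrier_mat n m" and Y': "Y' \<in> carrier_mat n m" and eq: "X * Y = X * Y'"
  shows "Y = Y'"
proof -
  have aX: "adj_mat X \<in> carrier_mat n n" "adj_mat X * X = det X \<cdot>\<^sub>m 1\<^sub>m n" using adj_mat[OF X] by auto
  have "det X \<cdot>\<^sub>m Y = adj_mat X * (X * Y)"
    using aX X Y by (simp add: assoc_mult_mat[of _ n n _ n _ m, symmetric] mult_smult_assoc_mat[of _ n n _ m])
  also have "\<dots> = det X \<cdot>\<^sub>m Y'" unfolding eq
    using aX X Y' by (simp add: assoc_mult_mat[of _ n n _ n _ m, symmetric] mult_smult_assoc_mat[of _ n n _ m])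
  finally have e: "det X \<cdot>\<^sub>m Y = det X \<cdot>\<^sub>m Y'" .
  show ?thesis
  proof (rule eq_matI)
    fix i j assume "i < dim_row Y'" "j < dim_col Y'"
    hence "det X * Y $$ (i,j) = det X * Y' $$ (i,j)" using arg_cong[OF e, of "\<lambda>M. M $$ (i,j)"] Y Y' by auto
    thus "Y $$ (i,j) = Y' $$ (i,j)" using dX by simp
  qed (use Y Y' in auto)
qed




lemma mpoly_sharp: assumes "mpoly (blk F * d) M"
  shows "mpoly (blk F * d) (\<lambda>x. sharp F d (M (cnj x)))"
  unfolding sharp_def
  by (intro mpoly_mult mpoly_const mpoly_cnj assms) simp_all

lemma key_mat:
  fixes X1 X2 DD Y1 Y2 :: "complex mat"
  assumes c: "X1 \<in> carrier_mat n n" "X2 \<in> carrier_mat n n" "DD \<in> carrier_mat n n"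
    "Y1 \<in> carrier_mat n n" "Y2 \<in> carrier_mat n n"
  and eq: "X1 * DD * Y1 = X2 * DD * Y2"
  shows "det X1 \<cdot>\<^sub>m (DD * (Y1 * adj_mat Y2)) = det Y2 \<cdot>\<^sub>m ((adj_mat X1 * X2) * DD)"
proof -
  note aX = adj_mat[OF c(1)] and aY = adj_mat[OF c(5)]
  note as = assoc_mult_mat[of _ n n _ n _ n]
  note sm = mult_smult_distrib[of _ n n _ n] mult_smult_assoc_mat[of _ n n _ n]
  have "adj_mat X1 * (X1 * DD * Y1) * adj_mat Y2 = (adj_mat X1 * X1) * (DD * (Y1 * adj_mat Y2))"
    using c aX(1) aY(1) by (simp add: as)
  also have "\<dots> = det X1 \<cdot>\<^sub>m (DD * (Y1 * adj_mat Y2))"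
    unfolding aX(3) using c aX(1) aY(1) by (simp add: sm)
  finally have 1: "adj_mat X1 * (X1 * DD * Y1) * adj_mat Y2 = det X1 \<cdot>\<^sub>m (DD * (Y1 * adj_mat Y2))" .
  have "adj_mat X1 * (X2 * DD * Y2) * adj_mat Y2 = ((adj_mat X1 * X2) * DD) * (Y2 * adj_mat Y2)"
    using c aX(1) aY(1) by (simp add: as)
  also have "\<dots> = det Y2 \<cdot>\<^sub>m ((adj_mat X1 * X2) * DD)"
    unfolding aY(2) using c aX(1) aY(1) by (simp add: sm)
  finally have 2: "adj_mat X1 * (X2 * DD * Y2) * adj_mat Y2 = det Y2 \<cdot>\<^sub>m ((adj_mat X1 * X2) * DD)" .
  show ?thesis using 1 2 eq by simp
qed

lemma ident_mat:
  fixes X Y DD Z M :: "complex mat"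
  assumes c: "X \<in> carrier_mat n n" "Y \<in> carrier_mat n n" "DD \<in> carrier_mat n n"
    "Z \<in> carrier_mat n n" "M \<in> carrier_mat n n"
  and YD: "Y * DD = DD * Z" and dZ: "det Z = cc" and cc: "cc \<noteq> 0"
  shows "X * Y * DD * ((1/cc) \<cdot>\<^sub>m (adj_mat Z * M)) = X * DD * M"
proof -
  note aZ = adj_mat[OF c(4)]
  note as = assoc_mult_mat[of _ n n _ n _ n]
  note sm = mult_smult_distrib[of _ n n _ n] mult_smult_assoc_mat[of _ n n _ n]
  have "X * Y * DD * ((1/cc) \<cdot>\<^sub>m (adj_mat Z * M)) = (1/cc) \<cdot>\<^sub>m (X * (Y * DD) * (adj_mat Z * M))"
    using c aZ(1) by (simp add: as sm)
  also have "\<dots> = (1/cc) \<cdot>\<^sub>m (X * DD * ((Z * adj_mat Z) * M))"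
    unfolding YD using c aZ(1) by (simp add: as)
  also have "\<dots> = X * DD * M"
    unfolding aZ(2) dZ using c aZ(1) cc by (simp add: as sm)
  finally show ?thesis .
qed

lemma smult_cancel: fixes A B :: "complex mat"
  assumes "c \<noteq> 0" "c \<cdot>\<^sub>m A = c \<cdot>\<^sub>m B" "A \<in> carrier_mat n m" "B \<in> carrier_mat n m"
  shows "A = B"
proof (rule eq_matI)
  fix i j assume "i < dim_row B" "j < dim_col B"
  hence "c * A $$ (i,j) = c * B $$ (i,j)" using arg_cong[OF assms(2), of "\<lambda>M. M $$ (i,j)"] assms(3,4) by auto
  thus "A $$ (i,j) = B $$ (i,j)" using assms(1) by simp
qed (use assms in auto)

lemma det_adj_nz: fixes Z :: "complex mat"
  assumes Z: "Z \<in> carrier_mat n n" and dZ: "det Z \<noteq> 0"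
  shows "det (adj_mat Z) \<noteq> 0"
proof -
  note aZ = adj_mat[OF Z]
  have "det Z * det (adj_mat Z) = det (det Z \<cdot>\<^sub>m 1\<^sub>m n)"
    using det_mult[OF Z aZ(1)] aZ(2) by simp
  also have "\<dots> = det Z ^ n" by simp
  finally show ?thesis using dZ by auto
qed

lemma choose_a: fixes W0 :: "complex mat" assumes W0: "W0 \<in> carrier_mat n n"
  shows "\<exists>a. det (a \<cdot>\<^sub>m 1\<^sub>m n + cnj a \<cdot>\<^sub>m W0) \<noteq> 0"
proof -
  let ?cp = "char_poly W0"
  have "coeff ?cp n = 1" using degree_monic_char_poly[OF W0] by simp
  hence cp0: "?cp \<noteq> 0" by auto
  define f :: "real \<Rightarrow> complex" where "f t = - (1 + \<i> * t) / (1 - \<i> * t)" for t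
  have nz: "1 - \<i> * of_real t \<noteq> 0" for t by (simp add: complex_eq_iff)
  have "inj f"
  proof
    fix s t assume "f s = f t"
    hence "(1 + \<i> * s) * (1 - \<i> * t) = (1 + \<i> * t) * (1 - \<i> * s)"
      using nz[of s] nz[of t] unfolding f_def by (simp add: field_simps)
    hence "2 * \<i> * (of_real s - of_real t) = 0" by (simp add: algebra_simps)
    thus "s = t" by simp
  qed
  have "finite (f -` {x. poly ?cp x = 0})"
    using poly_roots_finite[OF cp0] \<open>inj f\<close> by (intro finite_vimageI) auto
  then obtain t where t: "t \<notin> f -` {x. poly ?cp x = 0}"
    using ex_new_if_finite[OF infinite_UNIV_char_0[where 'a=real]] by blast
  define a where "a = 1 + \<i> * of_real t"
  have ca: "cnj a = 1 - \<i> * of_real t" unfolding a_def by simp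
  have ca0: "cnj a \<noteq> 0" unfolding ca by (rule nz)
  have "\<not> eigenvalue W0 (f t)" using t eigenvalue_root_char_poly[OF W0] by auto
  hence d: "det (char_matrix W0 (f t)) \<noteq> 0" using eigenvalue_det[OF W0] by auto
  have "a \<cdot>\<^sub>m 1\<^sub>m n + cnj a \<cdot>\<^sub>m W0 = cnj a \<cdot>\<^sub>m char_matrix W0 (f t)"
  proof (rule eq_matI)
    fix i j assume "i < dim_row (cnj a \<cdot>\<^sub>m char_matrix W0 (f t))" "j < dim_col (cnj a \<cdot>\<^sub>m char_matrix W0 (f t))"
    hence ij: "i < n" "j < n" using W0 by (auto simp: char_matrix_def)
    have e: "cnj a * (- f t) = a" unfolding f_def ca a_def using nz[of t] by (simp add: field_simps)
    hence "a = - (cnj a * f t)" by simp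
    hence e2: "a + cnj a * f t = 0" using eq_neg_iff_add_eq_0 by blast
    show "(a \<cdot>\<^sub>m 1\<^sub>m n + cnj a \<cdot>\<^sub>m W0) $$ (i,j) = (cnj a \<cdot>\<^sub>m char_matrix W0 (f t)) $$ (i,j)"
      using ij W0 e2 by (auto simp: char_matrix_def algebra_simps)
  qed (use W0 in \<open>auto simp: char_matrix_def\<close>)
  hence "det (a \<cdot>\<^sub>m 1\<^sub>m n + cnj a \<cdot>\<^sub>m W0) = cnj a ^ n * det (char_matrix W0 (f t))"
    using W0 by (simp add: char_matrix_def)
  hence "det (a \<cdot>\<^sub>m 1\<^sub>m n + cnj a \<cdot>\<^sub>m W0) \<noteq> 0" using d ca0 by simp
  thus ?thesis by blast
qed

lemma infinite_inv_reals: "infinite ((\<lambda>z. 1/z) ` {z::complex. \<exists>x. z = of_real x \<and> 0 < x \<and> x \<le> 1})"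
proof -
  have "inj_on (\<lambda>z::complex. 1/z) {z::complex. \<exists>x. z = of_real x \<and> 0 < x \<and> x \<le> 1}"
    by (rule inj_onI) simp
  thus ?thesis using infinite_pos_reals finite_imageD by blast
qed

lemma pos_reals_props: "z \<in> {z::complex. \<exists>x. z = of_real x \<and> 0 < x \<and> x \<le> 1} \<Longrightarrow> z \<noteq> 0 \<and> cmod z \<le> 1"
  by auto




lemma choice2: assumes "\<forall>i<n. \<forall>j<n. \<exists>x. P i j x" shows "\<exists>f. \<forall>i<n. \<forall>j<n. P i j (f i j)"
proof -
  have "\<forall>p. \<exists>x. fst p < n \<longrightarrow> snd p < n \<longrightarrow> P (fst p) (snd p) x" using assms by auto
  from choice[OF this] obtain g where "\<forall>p. fst p < n \<longrightarrow> snd p < n \<longrightarrow> P (fst p) (snd p) (g p)" by blast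
  thus ?thesis by (intro exI[of _ "\<lambda>i j. g (i,j)"]) auto
qed

lemma main_nonC:
  fixes F :: fld and d n :: nat and A P1 M1 :: "int \<Rightarrow> complex mat" and ks :: "int list"
  assumes FC: "F \<noteq> FC" and n: "n = blk F * d"
  and A: "is_F_laurent F d A"
  and lks: "length ks = n"
  and same: "F = FH \<Longrightarrow> (\<And>i j. i < length ks \<Longrightarrow> j < length ks \<Longrightarrow> i div 2 = j div 2 \<Longrightarrow> ks ! i = ks ! j)"
  and Pp: "plus_factor n P1" and Mm: "minus_factor n M1"
  and fac: "\<forall>z. z \<noteq> 0 \<longrightarrow> leval n A z = leval n P1 z * diag_pow ks z * leval n M1 z"
  shows "\<exists>Ap Am. is_F_laurent F d Ap \<and> is_F_laurent F d Am \<and> plus_factor n Ap \<and> minus_factor n Am \<and>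
     (\<forall>z. z \<noteq> 0 \<longrightarrow> leval n A z = leval n Ap z * diag_pow ks z * leval n Am z)"
proof -
  define Dz where "Dz z = diag_pow ks z" for z
  have Dcar[simp]: "Dz z \<in> carrier_mat n n" for z unfolding Dz_def using diag_car[of ks z] lks by simp
  have Ddim[simp]: "dim_row (Dz z) = n" "dim_col (Dz z) = n" for z by (simp_all add: Dz_def lks)
  have lks': "length ks = blk F * d" using lks n by simp
  have Dsharp: "sharp F d (Dz z) = Dz (cnj z)" for z unfolding Dz_def by (rule sharp_diag[OF lks' same])
  have Acar: "\<forall>k. A k \<in> carrier_mat n n" and Afin: "finite (lsupp n A)"
    using A n by (auto simp: is_F_laurent_def is_laurent_def)
  have Ash: "sharp F d (A k) = A k" for k
    using A in_Fd_iff[OF n FC] by (auto simp: is_F_laurent_def)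
  have P1pos: "is_poly_pos n P1" and P1det: "\<forall>z. cmod z \<le> 1 \<longrightarrow> det (leval n P1 z) \<noteq> 0"
    using Pp by (auto simp: plus_factor_def)
  have P1car: "\<forall>k. P1 k \<in> carrier_mat n n" and P1fin: "finite (lsupp n P1)"
    using P1pos by (auto simp: is_poly_pos_def is_laurent_def)
  have M1neg: "is_poly_neg n M1" and M1det: "\<forall>w. cmod w \<le> 1 \<longrightarrow> det (leval_inv n M1 w) \<noteq> 0"
    using Mm by (auto simp: minus_factor_def)
  have M1car: "\<forall>k. M1 k \<in> carrier_mat n n" and M1fin: "finite (lsupp n M1)"
    using M1neg by (auto simp: is_poly_neg_def is_laurent_def)
  define P1f where "P1f = leval n P1"
  define M1w where "M1w = leval_inv n M1"
  define P1s where "P1s z = sharp F d (P1f (cnj z))" for z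
  define M1sw where "M1sw w = sharp F d (M1w (cnj w))" for w
  have mP1f: "mpoly n P1f" unfolding P1f_def by (rule mpoly_leval_pos[OF P1pos])
  have mM1w: "mpoly n M1w" unfolding M1w_def by (rule mpoly_leval_neg[OF M1neg])
  have mP1s: "mpoly n P1s" unfolding P1s_def n by (rule mpoly_sharp) (use mP1f n in simp)
  have mM1sw: "mpoly n M1sw" unfolding M1sw_def n by (rule mpoly_sharp) (use mM1w n in simp)
  have car1[simp]: "P1f z \<in> carrier_mat n n" "M1w z \<in> carrier_mat n n" "P1s z \<in> carrier_mat n n" "M1sw z \<in> carrier_mat n n" for z
    using mP1f mM1w mP1s mM1sw mpolyD(1) by blast+
  have dim1[simp]: "dim_row (P1f z) = n" "dim_col (P1f z) = n" "dim_row (M1w z) = n" "dim_col (M1w z) = n"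
    "dim_row (P1s z) = n" "dim_col (P1s z) = n" "dim_row (M1sw z) = n" "dim_col (M1sw z) = n" for z
    using carrier_matD[OF car1(1)[of z]] carrier_matD[OF car1(2)[of z]] carrier_matD[OF car1(3)[of z]]
      carrier_matD[OF car1(4)[of z]] by simp_all
  have M1eval: "leval n M1 z = M1w (1/z)" if "z \<noteq> 0" for z
    unfolding M1w_def by (rule leval_neg_inv[OF M1neg that])
  have fac': "leval n A z = P1f z * Dz z * M1w (1/z)" if "z \<noteq> 0" for z
    using fac that M1eval[OF that] unfolding P1f_def Dz_def by simp
  have EA: "P1f z * Dz z * M1w (1/z) = P1s z * Dz z * M1sw (1/z)" if z: "z \<noteq> 0" for z
  proof -
    have cz: "cnj z \<noteq> 0" using z by simp
    have "leval n A z = leval n (\<lambda>k. sharp F d (A k)) z" using Ash by simp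
    also have "\<dots> = sharp F d (leval n A (cnj z))" by (rule leval_sharp[OF n Acar Afin])
    also have "\<dots> = sharp F d (P1f (cnj z) * Dz (cnj z) * M1w (1 / cnj z))" using fac'[OF cz] by simp
    also have "\<dots> = sharp F d (P1f (cnj z)) * sharp F d (Dz (cnj z)) * sharp F d (M1w (1 / cnj z))"
      using sharp_mult[OF n] by simp
    also have "\<dots> = P1s z * Dz z * M1sw (1/z)"
      unfolding P1s_def M1sw_def Dsharp by simp
    finally show ?thesis using fac'[OF z] by simp
  qed
  define pm where "pm z = adj_mat (P1f z) * P1s z" for z
  define R where "R w = M1w w * adj_mat (M1sw w)" for w
  have mpm: "mpoly n pm" unfolding pm_def by (intro mpoly_mult mpoly_adj mP1f mP1s)
  have mR: "mpoly n R" unfolding R_def by (intro mpoly_mult mpoly_adj mM1w mM1sw)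
  have car2[simp]: "pm z \<in> carrier_mat n n" "R z \<in> carrier_mat n n" for z
    using mpm mR mpolyD(1) by blast+
  have dim2[simp]: "dim_row (pm z) = n" "dim_col (pm z) = n" "dim_row (R z) = n" "dim_col (R z) = n" for z
    using carrier_matD[OF car2(1)[of z]] carrier_matD[OF car2(2)[of z]] by simp_all
  have KM: "det (P1f z) \<cdot>\<^sub>m (Dz z * R (1/z)) = det (M1sw (1/z)) \<cdot>\<^sub>m (pm z * Dz z)" if z: "z \<noteq> 0" for z
    unfolding R_def pm_def by (rule key_mat[OF car1(1) car1(3) Dcar car1(2) car1(4) EA[OF z]])
  have KE: "det (P1f z) * (z powi (ks!i) * R (1/z) $$ (i,j)) = det (M1sw (1/z)) * (pm z $$ (i,j) * z powi (ks!j))"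
    if z: "z \<noteq> 0" and ij: "i < n" "j < n" for z i j
  proof -
    have "(det (P1f z) \<cdot>\<^sub>m (Dz z * R (1/z))) $$ (i,j) = (det (M1sw (1/z)) \<cdot>\<^sub>m (pm z * Dz z)) $$ (i,j)"
      using KM[OF z] by simp
    moreover have "(Dz z * R (1/z)) $$ (i,j) = z powi (ks!i) * R (1/z) $$ (i,j)"
      unfolding Dz_def by (rule diag_left) (use ij lks in auto)
    moreover have "(pm z * Dz z) $$ (i,j) = pm z $$ (i,j) * z powi (ks!j)"
      unfolding Dz_def by (rule diag_right) (use ij lks in auto)
    moreover have "dim_row (Dz z * R (1/z)) = n" "dim_col (Dz z * R (1/z)) = n"
      "dim_row (pm z * Dz z) = n" "dim_col (pm z * Dz z) = n"
      using carrier_matD[OF car2(1)[of z]] carrier_matD[OF car2(2)[of "1/z"]] by simp_all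
    ultimately show ?thesis using ij by simp
  qed
  obtain Qp where Qp: "(\<lambda>z. det (P1f z)) = poly Qp" using ispoly_det[OF mP1f] unfolding ispoly_def by blast
  obtain Sp where Sp: "(\<lambda>z. det (M1sw z)) = poly Sp" using ispoly_det[OF mM1sw] unfolding ispoly_def by blast
  have "\<forall>i<n. \<forall>j<n. \<exists>p. (\<lambda>z. pm z $$ (i,j)) = poly p" using mpm unfolding mpoly_def ispoly_def by blast
  from choice2[OF this] obtain Pp where Pp': "\<forall>i<n. \<forall>j<n. (\<lambda>z. pm z $$ (i,j)) = poly (Pp i j)" by blast
  hence Pp: "\<And>i j. i < n \<Longrightarrow> j < n \<Longrightarrow> (\<lambda>z. pm z $$ (i,j)) = poly (Pp i j)" by blast
  have "\<forall>i<n. \<forall>j<n. \<exists>p. (\<lambda>z. R z $$ (i,j)) = poly p" using mR unfolding mpoly_def ispoly_def by blast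
  from choice2[OF this] obtain Rp where Rp': "\<forall>i<n. \<forall>j<n. (\<lambda>z. R z $$ (i,j)) = poly (Rp i j)" by blast
  hence Rp: "\<And>i j. i < n \<Longrightarrow> j < n \<Longrightarrow> (\<lambda>z. R z $$ (i,j)) = poly (Rp i j)" by blast
  have Qnz: "\<forall>z. cmod z \<le> 1 \<longrightarrow> poly Qp z \<noteq> 0"
  proof (intro allI impI)
    fix z :: complex assume "cmod z \<le> 1"
    hence "det (P1f z) \<noteq> 0" using P1det unfolding P1f_def by simp
    moreover have "poly Qp z = det (P1f z)" using fun_cong[OF Qp, of z] by simp
    ultimately show "poly Qp z \<noteq> 0" by simp
  qed
  have Snz: "\<forall>w. cmod w \<le> 1 \<longrightarrow> poly Sp w \<noteq> 0"
  proof (intro allI impI)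
    fix w :: complex assume w: "cmod w \<le> 1"
    have "poly Sp w = cnj (det (M1w (cnj w)))"
      using fun_cong[OF Sp, of w] sharp_det[OF n, of "M1w (cnj w)"] unfolding M1sw_def by simp
    moreover have "det (M1w (cnj w)) \<noteq> 0" using M1det w unfolding M1w_def by simp
    ultimately show "poly Sp w \<noteq> 0" by simp
  qed
  have "\<forall>i<n. \<forall>j<n. \<exists>T. Pp i j = Qp * T \<and> (\<exists>g. \<forall>z. z \<noteq> 0 \<longrightarrow> poly T z * z powi (ks!j - ks!i) = poly g (1/z))"
  proof (intro allI impI)
    fix i j assume ij: "i < n" "j < n"
    show "\<exists>T. Pp i j = Qp * T \<and> (\<exists>g. \<forall>z. z \<noteq> 0 \<longrightarrow> poly T z * z powi (ks!j - ks!i) = poly g (1/z))"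
    proof (rule key_poly[OF Qnz Snz], intro allI impI)
      fix z :: complex assume z: "z \<noteq> 0"
      have e1: "poly Qp z = det (P1f z)" "poly Sp (1/z) = det (M1sw (1/z))"
        "poly (Pp i j) z = pm z $$ (i,j)" "poly (Rp i j) (1/z) = R (1/z) $$ (i,j)"
        using fun_cong[OF Qp, of z] fun_cong[OF Sp, of "1/z"] fun_cong[OF Pp[OF ij], of z] fun_cong[OF Rp[OF ij], of "1/z"]
        by simp_all
      show "poly Sp (1/z) * poly (Pp i j) z * z powi (ks!j) = poly Qp z * z powi (ks!i) * poly (Rp i j) (1/z)"
        unfolding e1 using KE[OF z ij] by (simp add: mult_ac)
    qed
  qed
  from choice2[OF this] obtain TT where TT': "\<forall>i<n. \<forall>j<n. Pp i j = Qp * TT i j \<and>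
      (\<exists>g. \<forall>z. z \<noteq> 0 \<longrightarrow> poly (TT i j) z * z powi (ks!j - ks!i) = poly g (1/z))" by blast
  hence TT: "\<And>i j. i < n \<Longrightarrow> j < n \<Longrightarrow> Pp i j = Qp * TT i j" by blast
  have "\<forall>i<n. \<forall>j<n. \<exists>g. \<forall>z. z \<noteq> 0 \<longrightarrow> poly (TT i j) z * z powi (ks!j - ks!i) = poly g (1/z)"
    using TT' by blast
  from choice2[OF this] obtain gg where gg': "\<forall>i<n. \<forall>j<n. \<forall>z. z \<noteq> 0 \<longrightarrow> poly (TT i j) z * z powi (ks!j - ks!i) = poly (gg i j) (1/z)"
    by blast
  hence gg: "\<And>i j z. i < n \<Longrightarrow> j < n \<Longrightarrow> z \<noteq> 0 \<Longrightarrow> poly (TT i j) z * z powi (ks!j - ks!i) = poly (gg i j) (1/z)"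
    by blast
  define W where "W z = mat n n (\<lambda>(i,j). poly (TT i j) z)" for z
  have mW: "mpoly n W" unfolding W_def by (rule mpoly_mat) (auto simp: ispoly_def)
  have Wcar[simp]: "W z \<in> carrier_mat n n" for z unfolding W_def by simp
  have WP: "P1f z * W z = P1s z" if z: "cmod z \<le> 1" for z
  proof -
    have qz: "det (P1f z) \<noteq> 0" using P1det z unfolding P1f_def by simp
    have "pm z = det (P1f z) \<cdot>\<^sub>m W z"
    proof (rule eq_matI)
      fix i j assume "i < dim_row (det (P1f z) \<cdot>\<^sub>m W z)" "j < dim_col (det (P1f z) \<cdot>\<^sub>m W z)"
      hence ij: "i < n" "j < n" by (auto simp: W_def)
      have "pm z $$ (i,j) = poly (Pp i j) z" using fun_cong[OF Pp[OF ij], of z] by simp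
      also have "\<dots> = poly Qp z * poly (TT i j) z" using TT[OF ij] by simp
      also have "\<dots> = det (P1f z) * poly (TT i j) z" using fun_cong[OF Qp, of z] by simp
      finally show "pm z $$ (i,j) = (det (P1f z) \<cdot>\<^sub>m W z) $$ (i,j)" using ij by (simp add: W_def)
    qed (auto simp: W_def)
    hence "det (P1f z) \<cdot>\<^sub>m (P1f z * W z) = P1f z * pm z"
      using mult_smult_distrib[of "P1f z" n n "W z" n] by simp
    also have "\<dots> = (P1f z * adj_mat (P1f z)) * P1s z"
      unfolding pm_def using adj_mat(1)[OF car1(1)] by (simp add: assoc_mult_mat[of _ n n _ n _ n])
    also have "\<dots> = det (P1f z) \<cdot>\<^sub>m P1s z"
      unfolding adj_mat(2)[OF car1(1)] by (simp add: mult_smult_assoc_mat[of _ n n _ n])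
    finally show ?thesis using smult_cancel[OF qz] by (intro smult_cancel[OF qz _ _ car1(3)]) (use car1(1) Wcar in auto)
  qed
  have WPall: "P1f z * W z = P1s z" for z
    by (rule mpoly_ident[OF mpoly_mult[OF mP1f mW] mP1s infinite_pos_reals]) (use WP pos_reals_props in blast)
  obtain a where a: "det (a \<cdot>\<^sub>m 1\<^sub>m n + cnj a \<cdot>\<^sub>m W 0) \<noteq> 0" using choose_a[OF Wcar[of 0]] by blast
  define Y where "Y z = a \<cdot>\<^sub>m 1\<^sub>m n + cnj a \<cdot>\<^sub>m W z" for z
  have Ycar[simp]: "Y z \<in> carrier_mat n n" for z unfolding Y_def by simp
  have Ydim[simp]: "dim_row (Y z) = n" "dim_col (Y z) = n" for z unfolding Y_def by (simp_all add: W_def)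
  have mY: "mpoly n Y" unfolding Y_def
    by (intro mpoly_add mpoly_smult mpoly_const mW) auto
  define Pc where "Pc k = a \<cdot>\<^sub>m P1 k + cnj a \<cdot>\<^sub>m sharp F d (P1 k)" for k
  have sP1car: "\<forall>k. sharp F d (P1 k) \<in> carrier_mat n n" using P1car sharp_carrier[OF n] by blast
  have sP1fin: "finite (lsupp n (\<lambda>k. sharp F d (P1 k)))" using lsupp_sharp[OF n P1car] P1fin by simp
  have Pceval: "leval n Pc z = P1f z * Y z" for z
  proof -
    have "leval n Pc z = a \<cdot>\<^sub>m leval n P1 z + cnj a \<cdot>\<^sub>m leval n (\<lambda>k. sharp F d (P1 k)) z"
      unfolding Pc_def by (rule leval_lin[OF P1car P1fin sP1car sP1fin])
    also have "\<dots> = a \<cdot>\<^sub>m P1f z + cnj a \<cdot>\<^sub>m P1s z"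
      unfolding leval_sharp[OF n P1car P1fin] P1s_def P1f_def by simp
    also have "\<dots> = P1f z * Y z"
      unfolding Y_def WPall[of z, symmetric]
      by (simp add: mult_add_distrib_mat[of _ n n _ n] mult_smult_distrib[of _ n n _ n])
    finally show ?thesis .
  qed
  define Zw where "Zw w = mat n n (\<lambda>(i,j). (if i = j then a else 0) + cnj a * poly (gg i j) w)" for w
  have Zcar[simp]: "Zw w \<in> carrier_mat n n" for w unfolding Zw_def by simp
  have mZ: "mpoly n Zw" unfolding Zw_def
    by (rule mpoly_mat) (auto intro!: ispoly_add ispoly_mult simp: ispoly_def[of "poly _"])
  have DZ: "Dz z * Zw (1/z) = Y z * Dz z" if z: "z \<noteq> 0" for z
  proof (rule eq_matI)
    fix i j assume "i < dim_row (Y z * Dz z)" "j < dim_col (Y z * Dz z)"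
    hence ij: "i < n" "j < n" by auto
    have l: "(Dz z * Zw (1/z)) $$ (i,j) = z powi (ks!i) * Zw (1/z) $$ (i,j)"
      unfolding Dz_def by (rule diag_left) (use ij lks in auto)
    have r: "(Y z * Dz z) $$ (i,j) = Y z $$ (i,j) * z powi (ks!j)"
      unfolding Dz_def by (rule diag_right) (use ij lks in auto)
    have g: "poly (gg i j) (1/z) = poly (TT i j) z * z powi (ks!j - ks!i)" using gg[OF ij z] by simp
    have p: "z powi (ks!i) * z powi (ks!j - ks!i) = z powi (ks!j)"
      using z by (simp add: power_int_add[symmetric])
    have zij: "Zw (1/z) $$ (i,j) = (if i = j then a else 0) + cnj a * (poly (TT i j) z * z powi (ks!j - ks!i))"
      using ij g by (simp add: Zw_def)
    have yij: "Y z $$ (i,j) = (if i = j then a else 0) + cnj a * poly (TT i j) z"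
      using ij by (simp add: Y_def W_def)
    have "z powi (ks!i) * Zw (1/z) $$ (i,j) = Y z $$ (i,j) * z powi (ks!j)"
    proof (cases "i = j")
      case True
      have "z powi (ks!i) * Zw (1/z) $$ (i,j) = a * z powi (ks!i) + cnj a * poly (TT i j) z * (z powi (ks!i) * z powi (ks!j - ks!i))"
        unfolding zij using True by (simp add: algebra_simps)
      thus ?thesis unfolding p yij using True by (simp add: algebra_simps)
    next
      case False
      have "z powi (ks!i) * Zw (1/z) $$ (i,j) = cnj a * poly (TT i j) z * (z powi (ks!i) * z powi (ks!j - ks!i))"
        unfolding zij using False by (simp add: algebra_simps)
      thus ?thesis unfolding p yij using False by (simp add: algebra_simps)
    qed
    thus "(Dz z * Zw (1/z)) $$ (i,j) = (Y z * Dz z) $$ (i,j)" unfolding l r .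
  qed (auto simp: Zw_def)
  have dYp: "ispoly (\<lambda>z. det (Y z))" by (rule ispoly_det[OF mY])
  have dZp: "ispoly (\<lambda>w. det (Zw w))" by (rule ispoly_det[OF mZ])
  have dDZ: "det (Zw (1/z)) = det (Y z)" if z: "z \<noteq> 0" for z
  proof -
    have "det (Dz z) * det (Zw (1/z)) = det (Y z) * det (Dz z)"
      using arg_cong[OF DZ[OF z], of det] det_mult[OF Dcar Zcar] det_mult[OF Ycar Dcar] by simp
    moreover have "det (Dz z) \<noteq> 0" unfolding Dz_def by (rule det_diag[OF z])
    ultimately show ?thesis by simp
  qed
  define cc where "cc = det (Y 0)"
  have Yconst: "det (Y z) = cc" for z
    unfolding cc_def by (rule ispoly_both_const[OF dYp dZp]) (use dDZ in simp)
  have Zconst: "det (Zw w) = cc" for w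
  proof -
    have "det (Zw w) = det (Zw 0)" for w
    proof (rule ispoly_both_const[OF dZp dYp], intro allI impI)
      fix z :: complex assume z: "z \<noteq> 0"
      have "det (Zw (1 / (1/z))) = det (Y (1/z))" by (rule dDZ) (use z in simp)
      thus "det (Zw z) = det (Y (1/z))" by simp
    qed
    moreover have "det (Zw 1) = cc" using dDZ[of 1] Yconst[of 1] by simp
    ultimately show ?thesis by metis
  qed
  have cc0: "cc \<noteq> 0" unfolding cc_def Y_def using a .
  define Mw where "Mw w = (1/cc) \<cdot>\<^sub>m (adj_mat (Zw w) * M1w w)" for w
  have Mcar[simp]: "Mw w \<in> carrier_mat n n" for w unfolding Mw_def using adj_mat(1)[OF Zcar] by simp
  have mM: "mpoly n Mw" unfolding Mw_def
    by (intro mpoly_smult mpoly_mult mpoly_adj mZ mM1w) simp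
  obtain Am where Amneg: "is_poly_neg n Am" and Ameval: "\<forall>w. leval_inv n Am w = Mw w"
    using mpoly_to_neg[OF mM] by blast
  have Amz: "leval n Am z = Mw (1/z)" if "z \<noteq> 0" for z
    using leval_neg_inv[OF Amneg that] Ameval by simp
  have IDENT: "leval n A z = leval n Pc z * Dz z * leval n Am z" if z: "z \<noteq> 0" for z
  proof -
    have "leval n Pc z * Dz z * leval n Am z = P1f z * Y z * Dz z * ((1/cc) \<cdot>\<^sub>m (adj_mat (Zw (1/z)) * M1w (1/z)))"
      unfolding Pceval Amz[OF z] Mw_def ..
    also have "\<dots> = P1f z * Dz z * M1w (1/z)"
      by (rule ident_mat[OF car1(1) Ycar Dcar Zcar car1(2) DZ[OF z, symmetric] Zconst cc0])
    finally show ?thesis using fac'[OF z] by simp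
  qed
  have Pccar: "\<forall>k. Pc k \<in> carrier_mat n n" unfolding Pc_def using P1car sP1car by auto
  have Pczero: "Pc k = 0\<^sub>m n n" if "P1 k = 0\<^sub>m n n" for k
  proof -
    have "sharp F d (P1 k) = 0\<^sub>m n n" using that sharp_zero[OF n] by simp
    thus ?thesis unfolding Pc_def using that by (intro eq_matI) auto
  qed
  have Pcsupp: "lsupp n Pc \<subseteq> lsupp n P1" unfolding lsupp_def using Pczero by auto
  have Pcfin: "finite (lsupp n Pc)" using finite_subset[OF Pcsupp P1fin] .
  have Pcpos: "is_poly_pos n Pc"
    unfolding is_poly_pos_def is_laurent_def using Pccar Pcfin Pczero P1pos
    by (auto simp: is_poly_pos_def)
  have Pcplus: "plus_factor n Pc"
  proof -
    have "det (leval n Pc z) \<noteq> 0" if "cmod z \<le> 1" for z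
    proof -
      have "det (leval n Pc z) = det (P1f z) * cc"
        unfolding Pceval det_mult[OF car1(1) Ycar] Yconst ..
      moreover have "det (P1f z) \<noteq> 0" using P1det that unfolding P1f_def by simp
      ultimately show ?thesis using cc0 by simp
    qed
    thus ?thesis unfolding plus_factor_def using Pcpos by blast
  qed
  have Pcsh: "sharp F d (Pc k) = Pc k" for k
  proof -
    have c1: "P1 k \<in> carrier_mat n n" and c2: "sharp F d (P1 k) \<in> carrier_mat n n" using P1car sP1car by auto
    have "sharp F d (Pc k) = cnj a \<cdot>\<^sub>m sharp F d (P1 k) + cnj (cnj a) \<cdot>\<^sub>m sharp F d (sharp F d (P1 k))"
      unfolding Pc_def by (rule sharp_lin[OF n c1 c2])
    also have "\<dots> = cnj a \<cdot>\<^sub>m sharp F d (P1 k) + a \<cdot>\<^sub>m P1 k" using sharp_sharp[OF n c1] by simp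
    also have "\<dots> = Pc k" unfolding Pc_def by (rule comm_add_mat[of _ n n]) (use c1 c2 in auto)
    finally show ?thesis .
  qed
  have PcF: "is_F_laurent F d Pc"
    unfolding is_F_laurent_def n[symmetric] using Pcpos Pcsh Pccar in_Fd_iff[OF n FC]
    by (auto simp: is_poly_pos_def)
  have Amcar: "\<forall>k. Am k \<in> carrier_mat n n" and Amfin: "finite (lsupp n Am)"
    using Amneg by (auto simp: is_poly_neg_def is_laurent_def)
  have Amminus: "minus_factor n Am"
  proof -
    have "det (leval_inv n Am w) \<noteq> 0" if "cmod w \<le> 1" for w
    proof -
      have aZ: "adj_mat (Zw w) \<in> carrier_mat n n" using adj_mat(1)[OF Zcar] .
      have "det (leval_inv n Am w) = (1/cc) ^ n * (det (adj_mat (Zw w)) * det (M1w w))"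
        using Ameval det_mult[OF aZ car1(2)] aZ unfolding Mw_def by simp
      moreover have "det (adj_mat (Zw w)) \<noteq> 0" using det_adj_nz[OF Zcar] Zconst cc0 by simp
      moreover have "det (M1w w) \<noteq> 0" using M1det that unfolding M1w_def by simp
      ultimately show ?thesis using cc0 by simp
    qed
    thus ?thesis unfolding minus_factor_def using Amneg by blast
  qed
  define Pf where "Pf = leval n Pc"
  have PfA: "leval n A z = Pf z * Dz z * Mw (1/z)" if "z \<noteq> 0" for z
    using IDENT[OF that] Amz[OF that] unfolding Pf_def by simp
  have Pfsh: "sharp F d (Pf (cnj z)) = Pf z" for z
    using leval_sharp[OF n Pccar Pcfin, of z] Pcsh unfolding Pf_def by simp
  have Asym: "leval n A z = sharp F d (leval n A (cnj z))" for z
    using leval_sharp[OF n Acar Afin, of z] Ash by simp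
  have Msym: "sharp F d (Mw (cnj w)) = Mw w" for w
  proof (rule mpoly_ident[OF _ mM infinite_inv_reals, of "\<lambda>w. sharp F d (Mw (cnj w))"])
    show "mpoly n (\<lambda>w. sharp F d (Mw (cnj w)))" unfolding n by (rule mpoly_sharp) (use mM n in simp)
  next
    show "\<forall>w\<in>(\<lambda>z. 1/z) ` {z::complex. \<exists>x. z = of_real x \<and> 0 < x \<and> x \<le> 1}. sharp F d (Mw (cnj w)) = Mw w"
    proof
      fix w assume "w \<in> (\<lambda>z. 1/z) ` {z::complex. \<exists>x. z = of_real x \<and> 0 < x \<and> x \<le> 1}"
      then obtain z where zS: "z \<in> {z::complex. \<exists>x. z = of_real x \<and> 0 < x \<and> x \<le> 1}" and w: "w = 1/z" by blast
      have z: "z \<noteq> 0" and z1: "cmod z \<le> 1" using pos_reals_props[OF zS] by auto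
      have cz: "cnj z \<noteq> 0" using z by simp
      have Pfcar: "Pf x \<in> carrier_mat n n" for x unfolding Pf_def by simp
      have "Pf z * Dz z * Mw (1/z) = sharp F d (Pf (cnj z) * Dz (cnj z) * Mw (1 / cnj z))"
        using PfA[OF z] PfA[OF cz] Asym[of z] by simp
      also have "\<dots> = Pf z * Dz z * sharp F d (Mw (cnj w))"
        using sharp_mult[OF n] Pfcar by (simp add: Pfsh Dsharp w)
      finally have e: "(Pf z * Dz z) * Mw w = (Pf z * Dz z) * sharp F d (Mw (cnj w))" unfolding w .
      have dP: "det (Pf z) \<noteq> 0" using Pcplus z1 unfolding plus_factor_def Pf_def by simp
      have dD: "det (Dz z) \<noteq> 0" unfolding Dz_def by (rule det_diag[OF z])
      have "det (Pf z * Dz z) \<noteq> 0" using det_mult[OF Pfcar Dcar] dP dD by simp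
      moreover have PDcar: "Pf z * Dz z \<in> carrier_mat n n" using Pfcar[of z] Dcar[of z] by simp
      ultimately have "Mw w = sharp F d (Mw (cnj w))"
        using cancel_left[OF PDcar _ Mcar[of w] sharp_carrier[OF n Mcar[of "cnj w"]] e] by blast
      thus "sharp F d (Mw (cnj w)) = Mw w" by simp
    qed
  qed
  have sAmcar: "\<forall>k. sharp F d (Am k) \<in> carrier_mat n n" using Amcar sharp_carrier[OF n] by blast
  have sAmneg: "is_poly_neg n (\<lambda>k. sharp F d (Am k))"
    unfolding is_poly_neg_def is_laurent_def
    using sAmcar lsupp_sharp[OF n Amcar] Amfin Amneg sharp_zero[OF n]
    by (auto simp: is_poly_neg_def)
  have "(\<lambda>k. sharp F d (Am k)) = Am"
  proof (rule neg_unique[OF sAmneg Amneg], intro allI)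
    fix w
    show "leval_inv n (\<lambda>k. sharp F d (Am k)) w = leval_inv n Am w"
      using leval_inv_sharp[OF n Amcar Amfin, of w] Ameval Msym by simp
  qed
  hence Amsh: "sharp F d (Am k) = Am k" for k by metis
  have AmF: "is_F_laurent F d Am"
    unfolding is_F_laurent_def n[symmetric] using Amneg Amsh Amcar in_Fd_iff[OF n FC]
    by (auto simp: is_poly_neg_def)
  show ?thesis
    using PcF AmF Pcplus Amminus IDENT unfolding Dz_def by blast
qed



theorem theorem3p1:
  fixes F :: fld and d :: nat and A :: "int \<Rightarrow> complex mat" and K :: "int list"
  assumes "is_F_laurent F d A"
    and "\<forall>z. cmod z = 1 \<longrightarrow> det (leval (blk F * d) A z) \<noteq> 0"
    and "sym_partial_indices F d A K"
  shows "\<exists>Ap Am. is_F_laurent F d Ap \<and> is_F_laurent F d Am \<and>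
           plus_factor (blk F * d) Ap \<and> minus_factor (blk F * d) Am \<and>
           (\<forall>z. z \<noteq> 0 \<longrightarrow>
              leval (blk F * d) A z = leval (blk F * d) Ap z * D_F F K z * leval (blk F * d) Am z)"
proof -
  define n where "n = blk F * d"
  define ks where "ks = expand_idx F K"
  have lenK: "length K = d" and spi: "std_partial_indices n A ks"
    using assms(3) unfolding sym_partial_indices_def n_def ks_def by auto
  have lks: "length ks = n" using spi unfolding std_partial_indices_def by simp
  obtain P1 M1 where Pp: "plus_factor n P1" and Mm: "minus_factor n M1"
    and fac: "\<forall>z. z \<noteq> 0 \<longrightarrow> leval n A z = leval n P1 z * diag_pow ks z * leval n M1 z"
    using spi unfolding std_partial_indices_def by blast
  have DF: "D_F F K z = diag_pow ks z" for z unfolding ks_def by (rule D_F_eq)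
  have "\<exists>Ap Am. is_F_laurent F d Ap \<and> is_F_laurent F d Am \<and> plus_factor n Ap \<and> minus_factor n Am \<and>
     (\<forall>z. z \<noteq> 0 \<longrightarrow> leval n A z = leval n Ap z * diag_pow ks z * leval n Am z)"
  proof (cases "F = FC")
    case True
    have "is_F_laurent F d P1" "is_F_laurent F d M1"
      using Pp Mm True unfolding is_F_laurent_def plus_factor_def minus_factor_def is_poly_pos_def
        is_poly_neg_def in_Fd_def n_def is_laurent_def by auto
    thus ?thesis using Pp Mm fac by blast
  next
    case False
    show ?thesis
    proof (rule main_nonC[OF False n_def assms(1) lks _ Pp Mm fac])
      fix i j assume "F = FH" "i < length ks" "j < length ks" "i div 2 = j div 2"
      thus "ks ! i = ks ! j" unfolding ks_def by (rule expand_same)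
    qed
  qed
  thus ?thesis unfolding DF n_def .
qed

end
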